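(* Let $R$ be a commutative ring, $M$ an $R$-module having at least one prime submodule, and $X=\mathrm{Spec}(M)$. For each $P\in X$, the stalk $\mathcal{A}_{X,P}$ of the sheaf of rings $\mathcal{A}_X$ is isomorphic to $R_{\mathfrak p}$, where $\mathfrak p=(P:M)$. Moreover, $(X,\mathcal{A}_X)$ is a locally ringed space.
   Context: For a submodule $L$ of an $R$-module $M$, $(L:M)=\{r\in R\mid rM\subseteq L\}$. A submodule $P$ of $M$ is prime if $P\neq M$ and whenever $rm\in P$ ($r\in R$, $m\in M$) then $r\in (P:M)$ or $m\in P$; then $(P:M)$ is a prime ideal. $\mathrm{Spec}(M)$ is the set of prime submodules. For $L\le M$, $V(L)=\{P\in X\mid (P:M)\supseteq (L:M)\}$; these are the closed sets of the Zariski topology on $X$. For open $U\subseteq X$, $\mathrm{Supp}(U)=\{(P:M)\mid P\in U\}$. The sheaf of rings $\mathcal{A}_X$: $\mathcal{A}_X(U)$ is the set of families $(\gamma_{\mathfrak p})_{\mathfrak p\in\mathrm{Supp}(U)}\in\prod_{\mathfrak p\in\mathrm{Supp}(U)}R_{\mathfrak p}$ such that for each $Q\in U$ there exist an open neighbourhood $W\subseteq U$ of $Q$ and $s,a\in R$ with $s\notin (P:M)$ and $\gamma_{(P:M)}=a/s$ for all $P\in W$; operations componentwise, restriction maps restrict families, $\mathcal{A}_X(\emptyset)=0$. *)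

theory Defs
  imports Complex_Main "HOL-Algebra.QuotRing"
begin

text \<open>The base ring is the type 'a (a commutative ring with 1), the module is the
type 'm with scalar multiplication sc satisfying the axioms of the HOL locale module.\<close>

definition colon :: "('a::comm_ring_1 \<Rightarrow> 'm::ab_group_add \<Rightarrow> 'm) \<Rightarrow> 'm set \<Rightarrow> 'a set" where
  "colon sc L = {r. \<forall>m. sc r m \<in> L}"

definition prime_submodule :: "('a::comm_ring_1 \<Rightarrow> 'm::ab_group_add \<Rightarrow> 'm) \<Rightarrow> 'm set \<Rightarrow> bool" where
  "prime_submodule sc P \<longleftrightarrow> module.subspace sc P \<and> P \<noteq> UNIV \<and>
     (\<forall>r m. sc r m \<in> P \<longrightarrow> r \<in> colon sc P \<or> m \<in> P)"

definition Spec :: "('a::comm_ring_1 \<Rightarrow> 'm::ab_group_add \<Rightarrow> 'm) \<Rightarrow> 'm set set" where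
  "Spec sc = {P. prime_submodule sc P}"

definition VV :: "('a::comm_ring_1 \<Rightarrow> 'm::ab_group_add \<Rightarrow> 'm) \<Rightarrow> 'm set \<Rightarrow> 'm set set" where
  "VV sc L = {P \<in> Spec sc. colon sc L \<subseteq> colon sc P}"

definition zopen :: "('a::comm_ring_1 \<Rightarrow> 'm::ab_group_add \<Rightarrow> 'm) \<Rightarrow> 'm set set \<Rightarrow> bool" where
  "zopen sc U \<longleftrightarrow> (\<exists>L. module.subspace sc L \<and> U = Spec sc - VV sc L)"

definition Supp :: "('a::comm_ring_1 \<Rightarrow> 'm::ab_group_add \<Rightarrow> 'm) \<Rightarrow> 'm set set \<Rightarrow> 'a set set" where
  "Supp sc U = colon sc ` U"

definition loc_rel :: "'a::comm_ring_1 set \<Rightarrow> (('a \<times> 'a) \<times> ('a \<times> 'a)) set" where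
  "loc_rel p = {((a, s), (b, t)). s \<notin> p \<and> t \<notin> p \<and> (\<exists>u. u \<notin> p \<and> u * (a * t - b * s) = 0)}"

definition frac :: "'a::comm_ring_1 set \<Rightarrow> 'a \<Rightarrow> 'a \<Rightarrow> ('a \<times> 'a) set" where
  "frac p a s = loc_rel p `` {(a, s)}"

definition loc_carrier :: "'a::comm_ring_1 set \<Rightarrow> ('a \<times> 'a) set set" where
  "loc_carrier p = {frac p a s | a s. s \<notin> p}"

definition loc_add :: "'a::comm_ring_1 set \<Rightarrow> ('a \<times> 'a) set \<Rightarrow> ('a \<times> 'a) set \<Rightarrow> ('a \<times> 'a) set" where
  "loc_add p x y = \<Union>{frac p (a * t + b * s) (s * t) | a s b t. (a, s) \<in> x \<and> (b, t) \<in> y}"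

definition loc_mult :: "'a::comm_ring_1 set \<Rightarrow> ('a \<times> 'a) set \<Rightarrow> ('a \<times> 'a) set \<Rightarrow> ('a \<times> 'a) set" where
  "loc_mult p x y = \<Union>{frac p (a * b) (s * t) | a s b t. (a, s) \<in> x \<and> (b, t) \<in> y}"

definition loc_ring :: "'a::comm_ring_1 set \<Rightarrow> ('a \<times> 'a) set ring" where
  "loc_ring p = \<lparr>carrier = loc_carrier p, mult = loc_mult p, one = frac p 1 1,
                 zero = frac p 0 1, add = loc_add p\<rparr>"

text \<open>A family indexed by Supp(U) is represented by a function on all ideals that is
the empty set outside Supp(U).\<close>
definition sections :: "('a::comm_ring_1 \<Rightarrow> 'm::ab_group_add \<Rightarrow> 'm) \<Rightarrow> 'm set set
    \<Rightarrow> ('a set \<Rightarrow> ('a \<times> 'a) set) set" where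
  "sections sc U = {\<gamma>. (\<forall>p. p \<notin> Supp sc U \<longrightarrow> \<gamma> p = {}) \<and>
      (\<forall>p \<in> Supp sc U. \<gamma> p \<in> loc_carrier p) \<and>
      (\<forall>Q \<in> U. \<exists>W. zopen sc W \<and> Q \<in> W \<and> W \<subseteq> U \<and>
          (\<exists>a s. \<forall>P \<in> W. s \<notin> colon sc P \<and> \<gamma> (colon sc P) = frac (colon sc P) a s))}"

definition sec_ring :: "('a::comm_ring_1 \<Rightarrow> 'm::ab_group_add \<Rightarrow> 'm) \<Rightarrow> 'm set set
    \<Rightarrow> ('a set \<Rightarrow> ('a \<times> 'a) set) ring" where
  "sec_ring sc U = \<lparr>carrier = sections sc U,
      mult = (\<lambda>\<gamma> \<delta> p. if p \<in> Supp sc U then loc_mult p (\<gamma> p) (\<delta> p) else {}),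
      one = (\<lambda>p. if p \<in> Supp sc U then frac p 1 1 else {}),
      zero = (\<lambda>p. if p \<in> Supp sc U then frac p 0 1 else {}),
      add = (\<lambda>\<gamma> \<delta> p. if p \<in> Supp sc U then loc_add p (\<gamma> p) (\<delta> p) else {})\<rparr>"

definition sec_res :: "('a::comm_ring_1 \<Rightarrow> 'm::ab_group_add \<Rightarrow> 'm) \<Rightarrow> 'm set set \<Rightarrow> 'm set set
    \<Rightarrow> ('a set \<Rightarrow> ('a \<times> 'a) set) \<Rightarrow> ('a set \<Rightarrow> ('a \<times> 'a) set)" where
  "sec_res sc U V \<gamma> = (\<lambda>p. if p \<in> Supp sc V then \<gamma> p else {})"

definition germ_rel :: "('u set \<Rightarrow> bool) \<Rightarrow> ('u set \<Rightarrow> ('s, 'e) ring_scheme)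
    \<Rightarrow> ('u set \<Rightarrow> 'u set \<Rightarrow> 's \<Rightarrow> 's) \<Rightarrow> 'u \<Rightarrow> (('u set \<times> 's) \<times> ('u set \<times> 's)) set" where
  "germ_rel Op F res x = {((U, s), (V, t)).
      Op U \<and> x \<in> U \<and> s \<in> carrier (F U) \<and> Op V \<and> x \<in> V \<and> t \<in> carrier (F V) \<and>
      (\<exists>W. Op W \<and> x \<in> W \<and> W \<subseteq> U \<inter> V \<and> res U W s = res V W t)}"

definition germ :: "('u set \<Rightarrow> bool) \<Rightarrow> ('u set \<Rightarrow> ('s, 'e) ring_scheme)
    \<Rightarrow> ('u set \<Rightarrow> 'u set \<Rightarrow> 's \<Rightarrow> 's) \<Rightarrow> 'u \<Rightarrow> 'u set \<Rightarrow> 's \<Rightarrow> ('u set \<times> 's) set" where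
  "germ Op F res x U s = germ_rel Op F res x `` {(U, s)}"

text \<open>The stalk at x: the direct limit of F(U) over open neighbourhoods U of x,
with ring operations computed on the common refinement U \<inter> V.\<close>
definition stalk :: "'u set \<Rightarrow> ('u set \<Rightarrow> bool) \<Rightarrow> ('u set \<Rightarrow> ('s, 'e) ring_scheme)
    \<Rightarrow> ('u set \<Rightarrow> 'u set \<Rightarrow> 's \<Rightarrow> 's) \<Rightarrow> 'u \<Rightarrow> ('u set \<times> 's) set ring" where
  "stalk X Op F res x = \<lparr>
     carrier = {germ Op F res x U s | U s. Op U \<and> x \<in> U \<and> s \<in> carrier (F U)},
     mult = (\<lambda>a b. \<Union>{germ Op F res x (U \<inter> V)
                 (res U (U \<inter> V) s \<otimes>\<^bsub>F (U \<inter> V)\<^esub> res V (U \<inter> V) t) | U s V t. (U, s) \<in> a \<and> (V, t) \<in> b}),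
     one = germ Op F res x X \<one>\<^bsub>F X\<^esub>,
     zero = germ Op F res x X \<zero>\<^bsub>F X\<^esub>,
     add = (\<lambda>a b. \<Union>{germ Op F res x (U \<inter> V)
                 (res U (U \<inter> V) s \<oplus>\<^bsub>F (U \<inter> V)\<^esub> res V (U \<inter> V) t) | U s V t. (U, s) \<in> a \<and> (V, t) \<in> b})\<rparr>"

definition local_ring :: "('s, 'e) ring_scheme \<Rightarrow> bool" where
  "local_ring A \<longleftrightarrow> cring A \<and> (\<exists>!I. maximalideal I A)"

definition is_topology_on :: "'u set \<Rightarrow> ('u set \<Rightarrow> bool) \<Rightarrow> bool" where
  "is_topology_on X Op \<longleftrightarrow> (\<forall>U. Op U \<longrightarrow> U \<subseteq> X) \<and> Op {} \<and> Op X \<and>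
     (\<forall>U V. Op U \<and> Op V \<longrightarrow> Op (U \<inter> V)) \<and> (\<forall>\<U>. (\<forall>U \<in> \<U>. Op U) \<longrightarrow> Op (\<Union>\<U>))"

definition sheaf_of_rings :: "'u set \<Rightarrow> ('u set \<Rightarrow> bool) \<Rightarrow> ('u set \<Rightarrow> ('s, 'e) ring_scheme)
    \<Rightarrow> ('u set \<Rightarrow> 'u set \<Rightarrow> 's \<Rightarrow> 's) \<Rightarrow> bool" where
  "sheaf_of_rings X Op F res \<longleftrightarrow>
     (\<forall>U. Op U \<longrightarrow> cring (F U)) \<and>
     (\<forall>U V. Op U \<and> Op V \<and> V \<subseteq> U \<longrightarrow> res U V \<in> ring_hom (F U) (F V)) \<and>
     (\<forall>U. Op U \<longrightarrow> (\<forall>s \<in> carrier (F U). res U U s = s)) \<and>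
     (\<forall>U V W. Op U \<and> Op V \<and> Op W \<and> W \<subseteq> V \<and> V \<subseteq> U \<longrightarrow>
        (\<forall>s \<in> carrier (F U). res V W (res U V s) = res U W s)) \<and>
     (\<forall>U \<U>. Op U \<and> (\<forall>V \<in> \<U>. Op V) \<and> \<Union>\<U> = U \<longrightarrow>
        (\<forall>s \<in> carrier (F U). \<forall>t \<in> carrier (F U). (\<forall>V \<in> \<U>. res U V s = res U V t) \<longrightarrow> s = t)) \<and>
     (\<forall>U \<U> f. Op U \<and> (\<forall>V \<in> \<U>. Op V) \<and> \<Union>\<U> = U \<and> (\<forall>V \<in> \<U>. f V \<in> carrier (F V)) \<and>
        (\<forall>V \<in> \<U>. \<forall>V' \<in> \<U>. res V (V \<inter> V') (f V) = res V' (V \<inter> V') (f V')) \<longrightarrow>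
        (\<exists>s \<in> carrier (F U). \<forall>V \<in> \<U>. res U V s = f V))"

definition locally_ringed_space :: "'u set \<Rightarrow> ('u set \<Rightarrow> bool) \<Rightarrow> ('u set \<Rightarrow> ('s, 'e) ring_scheme)
    \<Rightarrow> ('u set \<Rightarrow> 'u set \<Rightarrow> 's \<Rightarrow> 's) \<Rightarrow> bool" where
  "locally_ringed_space X Op F res \<longleftrightarrow> is_topology_on X Op \<and> sheaf_of_rings X Op F res \<and>
     (\<forall>x \<in> X. local_ring (stalk X Op F res x))"

definition AX_stalk :: "('a::comm_ring_1 \<Rightarrow> 'm::ab_group_add \<Rightarrow> 'm) \<Rightarrow> 'm set
    \<Rightarrow> ('m set set \<times> ('a set \<Rightarrow> ('a \<times> 'a) set)) set ring" where
  "AX_stalk sc P = stalk (Spec sc) (zopen sc) (sec_ring sc) (sec_res sc) P"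

end

theory Submission
  imports Defs
begin


definition prim :: "'a::comm_ring_1 set \<Rightarrow> bool" where
  "prim p \<longleftrightarrow> 1 \<notin> p \<and> 0 \<in> p \<and> (\<forall>a b. a \<in> p \<longrightarrow> b \<in> p \<longrightarrow> a + b \<in> p) \<and>
     (\<forall>r a. a \<in> p \<longrightarrow> r * a \<in> p) \<and> (\<forall>a b. a * b \<in> p \<longrightarrow> a \<in> p \<or> b \<in> p)"

lemma prim_mult: "prim p \<Longrightarrow> s \<notin> p \<Longrightarrow> t \<notin> p \<Longrightarrow> s * t \<notin> p"
  unfolding prim_def by blast
lemma prim_one: "prim p \<Longrightarrow> 1 \<notin> p" unfolding prim_def by blast
lemma prim_zero: "prim p \<Longrightarrow> 0 \<in> p" unfolding prim_def by blast
lemma prim_add: "prim p \<Longrightarrow> a \<in> p \<Longrightarrow> b \<in> p \<Longrightarrow> a + b \<in> p" unfolding prim_def by blast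
lemma prim_lmult: "prim p \<Longrightarrow> a \<in> p \<Longrightarrow> r * a \<in> p" unfolding prim_def by blast
lemma prim_rmult: "prim p \<Longrightarrow> a \<in> p \<Longrightarrow> a * r \<in> p" unfolding prim_def by (metis mult.commute)
lemma prim_prime: "prim p \<Longrightarrow> a * b \<in> p \<Longrightarrow> a \<in> p \<or> b \<in> p" unfolding prim_def by blast
lemma prim_neg: "prim p \<Longrightarrow> a \<in> p \<Longrightarrow> - a \<in> p" using prim_lmult[of p a "-1"] by simp
lemma prim_diff: "prim p \<Longrightarrow> a \<in> p \<Longrightarrow> b \<in> p \<Longrightarrow> a - b \<in> p"
  using prim_add[of p a "-b"] prim_neg by fastforce

lemma loc_rel_iff: "((a,s),(b,t)) \<in> loc_rel p \<longleftrightarrow> s \<notin> p \<and> t \<notin> p \<and> (\<exists>u. u \<notin> p \<and> u * (a * t - b * s) = 0)"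
  unfolding loc_rel_def by simp

lemma mem_frac: "(b,t) \<in> frac p a s \<longleftrightarrow> ((a,s),(b,t)) \<in> loc_rel p"
  unfolding frac_def by simp

lemma loc_rel_refl: "prim p \<Longrightarrow> s \<notin> p \<Longrightarrow> ((a,s),(a,s)) \<in> loc_rel p"
  unfolding loc_rel_iff using prim_one[of p] by (intro conjI exI[of _ 1]) auto

lemma loc_rel_sym: "((a,s),(b,t)) \<in> loc_rel p \<Longrightarrow> ((b,t),(a,s)) \<in> loc_rel p"
  unfolding loc_rel_iff
proof (elim conjE exE, intro conjI)
  fix u assume "u \<notin> p" "u * (a * t - b * s) = 0"
  then show "\<exists>u. u \<notin> p \<and> u * (b * s - a * t) = 0"
    by (intro exI[of _ u]) (simp add: algebra_simps)
qed auto

lemma loc_rel_trans: assumes "prim p" "((a,s),(b,t)) \<in> loc_rel p" "((b,t),(c,w)) \<in> loc_rel p"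
  shows "((a,s),(c,w)) \<in> loc_rel p"
proof -
  from assms obtain u v where uv: "u \<notin> p" "u * (a * t - b * s) = 0" "v \<notin> p" "v * (b * w - c * t) = 0"
    and st: "s \<notin> p" "t \<notin> p" "w \<notin> p" unfolding loc_rel_iff by blast
  have "u * v * t * (a * w - c * s) = v * w * (u * (a * t - b * s)) + u * s * (v * (b * w - c * t))"
    by (simp add: algebra_simps)
  also have "\<dots> = 0" using uv by simp
  finally have "(u * v * t) * (a * w - c * s) = 0" .
  moreover have "u * v * t \<notin> p" using uv st prim_mult[OF assms(1)] by metis
  ultimately show ?thesis using st unfolding loc_rel_iff by blast
qed

lemma frac_eq: assumes "prim p" "s \<notin> p" "t \<notin> p"
  shows "frac p a s = frac p b t \<longleftrightarrow> (\<exists>u. u \<notin> p \<and> u * (a * t - b * s) = 0)"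
proof
  assume "frac p a s = frac p b t"
  moreover have "(b,t) \<in> frac p b t" using loc_rel_refl[OF assms(1,3)] mem_frac by blast
  ultimately have "((a,s),(b,t)) \<in> loc_rel p" using mem_frac by blast
  then show "\<exists>u. u \<notin> p \<and> u * (a * t - b * s) = 0" unfolding loc_rel_iff by blast
next
  assume "\<exists>u. u \<notin> p \<and> u * (a * t - b * s) = 0"
  then have r: "((a,s),(b,t)) \<in> loc_rel p" using assms unfolding loc_rel_iff by blast
  show "frac p a s = frac p b t"
  proof (intro equalityI subsetI)
    fix x assume "x \<in> frac p a s"
    then obtain c w where x: "x = (c,w)" "((a,s),(c,w)) \<in> loc_rel p"
      by (cases x) (auto simp: mem_frac)
    then show "x \<in> frac p b t" using loc_rel_trans[OF assms(1) loc_rel_sym[OF r]] by (simp add: mem_frac)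
  next
    fix x assume "x \<in> frac p b t"
    then obtain c w where x: "x = (c,w)" "((b,t),(c,w)) \<in> loc_rel p"
      by (cases x) (auto simp: mem_frac)
    then show "x \<in> frac p a s" using loc_rel_trans[OF assms(1) r] by (simp add: mem_frac)
  qed
qed

lemma frac_eqI: "prim p \<Longrightarrow> s \<notin> p \<Longrightarrow> t \<notin> p \<Longrightarrow> a * t = b * s \<Longrightarrow> frac p a s = frac p b t"
  using frac_eq[of p s t a b] prim_one[of p] by (metis diff_self mult_zero_right)

lemma frac_mem_rep: "(b,t) \<in> frac p a s \<Longrightarrow> prim p \<Longrightarrow> frac p b t = frac p a s \<and> t \<notin> p \<and> s \<notin> p"
  unfolding mem_frac using frac_eq loc_rel_iff loc_rel_sym by metis

lemma Union_const: "A \<noteq> {} \<Longrightarrow> (\<And>x. x \<in> A \<Longrightarrow> x = c) \<Longrightarrow> \<Union>A = c"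
  by blast

lemma loc_add_frac: assumes p: "prim p" and st: "s \<notin> p" "t \<notin> p"
  shows "loc_add p (frac p a s) (frac p b t) = frac p (a * t + b * s) (s * t)"
  unfolding loc_add_def
proof (rule Union_const)
  have "(a,s) \<in> frac p a s" "(b,t) \<in> frac p b t" using loc_rel_refl[OF p] st mem_frac by blast+
  then show "{frac p (a' * t' + b' * s') (s' * t') | a' s' b' t'. (a', s') \<in> frac p a s \<and> (b', t') \<in> frac p b t} \<noteq> {}"
    by blast
  fix x assume "x \<in> {frac p (a' * t' + b' * s') (s' * t') | a' s' b' t'. (a', s') \<in> frac p a s \<and> (b', t') \<in> frac p b t}"
  then obtain a' s' b' t' where x: "x = frac p (a' * t' + b' * s') (s' * t')"
    and r1: "((a,s),(a',s')) \<in> loc_rel p" and r2: "((b,t),(b',t')) \<in> loc_rel p"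
    by (auto simp: mem_frac)
  from r1 r2 obtain u v where uv: "u \<notin> p" "u * (a * s' - a' * s) = 0" "v \<notin> p" "v * (b * t' - b' * t) = 0"
    and st': "s' \<notin> p" "t' \<notin> p" unfolding loc_rel_iff by blast
  have "u * v * ((a' * t' + b' * s') * (s * t) - (a * t + b * s) * (s' * t')) =
     - (v * t * t' * (u * (a * s' - a' * s)) + u * s * s' * (v * (b * t' - b' * t)))"
    by (simp add: algebra_simps)
  also have "\<dots> = 0" using uv by simp
  finally have e: "u * v * ((a' * t' + b' * s') * (s * t) - (a * t + b * s) * (s' * t')) = 0" .
  have "u * v \<notin> p" "s' * t' \<notin> p" "s * t \<notin> p" using prim_mult[OF p] uv st st' by auto
  then show "x = frac p (a * t + b * s) (s * t)" unfolding x
    using frac_eq[OF p, of "s' * t'" "s * t"] e by blast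
qed

lemma loc_mult_frac: assumes p: "prim p" and st: "s \<notin> p" "t \<notin> p"
  shows "loc_mult p (frac p a s) (frac p b t) = frac p (a * b) (s * t)"
  unfolding loc_mult_def
proof (rule Union_const)
  have "(a,s) \<in> frac p a s" "(b,t) \<in> frac p b t" using loc_rel_refl[OF p] st mem_frac by blast+
  then show "{frac p (a' * b') (s' * t') | a' s' b' t'. (a', s') \<in> frac p a s \<and> (b', t') \<in> frac p b t} \<noteq> {}"
    by blast
  fix x assume "x \<in> {frac p (a' * b') (s' * t') | a' s' b' t'. (a', s') \<in> frac p a s \<and> (b', t') \<in> frac p b t}"
  then obtain a' s' b' t' where x: "x = frac p (a' * b') (s' * t')"
    and r1: "((a,s),(a',s')) \<in> loc_rel p" and r2: "((b,t),(b',t')) \<in> loc_rel p"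
    by (auto simp: mem_frac)
  from r1 r2 obtain u v where uv: "u \<notin> p" "u * (a * s' - a' * s) = 0" "v \<notin> p" "v * (b * t' - b' * t) = 0"
    and st': "s' \<notin> p" "t' \<notin> p" unfolding loc_rel_iff by blast
  have "u * v * ((a' * b') * (s * t) - (a * b) * (s' * t')) =
     - (v * b * t' * (u * (a * s' - a' * s)) + u * a' * s * (v * (b * t' - b' * t)))"
    by (simp add: algebra_simps)
  also have "\<dots> = 0" using uv by simp
  finally have e: "u * v * ((a' * b') * (s * t) - (a * b) * (s' * t')) = 0" .
  have "u * v \<notin> p" "s' * t' \<notin> p" "s * t \<notin> p" using prim_mult[OF p] uv st st' by auto
  then show "x = frac p (a * b) (s * t)" unfolding x
    using frac_eq[OF p, of "s' * t'" "s * t"] e by blast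
qed


lemma loc_carrier_iff: "x \<in> loc_carrier p \<longleftrightarrow> (\<exists>a s. s \<notin> p \<and> x = frac p a s)"
  unfolding loc_carrier_def by blast

lemma frac_in_carrier: "s \<notin> p \<Longrightarrow> frac p a s \<in> loc_carrier p"
  unfolding loc_carrier_iff by blast

lemma loc_carrierE: assumes "x \<in> loc_carrier p" obtains a s where "s \<notin> p" "x = frac p a s"
  using assms unfolding loc_carrier_iff by blast

context fixes p :: "'a::comm_ring_1 set" assumes p: "prim p"
begin

lemma pm: "s \<notin> p \<Longrightarrow> t \<notin> p \<Longrightarrow> s * t \<notin> p" using prim_mult[OF p] .
lemma p1: "1 \<notin> p" using prim_one[OF p] .

lemma la_closed: "x \<in> loc_carrier p \<Longrightarrow> y \<in> loc_carrier p \<Longrightarrow> loc_add p x y \<in> loc_carrier p"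
  by (elim loc_carrierE) (simp add: loc_add_frac[OF p] pm frac_in_carrier)

lemma lm_closed: "x \<in> loc_carrier p \<Longrightarrow> y \<in> loc_carrier p \<Longrightarrow> loc_mult p x y \<in> loc_carrier p"
  by (elim loc_carrierE) (simp add: loc_mult_frac[OF p] pm frac_in_carrier)

lemma la_assoc: "x \<in> loc_carrier p \<Longrightarrow> y \<in> loc_carrier p \<Longrightarrow> z \<in> loc_carrier p \<Longrightarrow>
    loc_add p (loc_add p x y) z = loc_add p x (loc_add p y z)"
proof (elim loc_carrierE)
  fix a s b t c w assume st: "s \<notin> p" "t \<notin> p" "w \<notin> p" and xyz: "x = frac p a s" "y = frac p b t" "z = frac p c w"
  have st2: "s * t \<notin> p" "t * w \<notin> p" "s * t * w \<notin> p" "s * (t * w) \<notin> p" using st pm by auto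
  show ?thesis unfolding xyz
    apply (subst loc_add_frac[OF p st(1) st(2)])
    apply (subst loc_add_frac[OF p st2(1) st(3)])
    apply (subst loc_add_frac[OF p st(2) st(3)])
    apply (subst loc_add_frac[OF p st(1) st2(2)])
    apply (rule frac_eqI[OF p st2(3) st2(4)])
    by (simp add: algebra_simps)
qed

lemma lm_assoc: "x \<in> loc_carrier p \<Longrightarrow> y \<in> loc_carrier p \<Longrightarrow> z \<in> loc_carrier p \<Longrightarrow>
    loc_mult p (loc_mult p x y) z = loc_mult p x (loc_mult p y z)"
proof (elim loc_carrierE)
  fix a s b t c w assume st: "s \<notin> p" "t \<notin> p" "w \<notin> p" and xyz: "x = frac p a s" "y = frac p b t" "z = frac p c w"
  have st2: "s * t \<notin> p" "t * w \<notin> p" "s * t * w \<notin> p" "s * (t * w) \<notin> p" using st pm by auto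
  show ?thesis unfolding xyz
    apply (subst loc_mult_frac[OF p st(1) st(2)])
    apply (subst loc_mult_frac[OF p st2(1) st(3)])
    apply (subst loc_mult_frac[OF p st(2) st(3)])
    apply (subst loc_mult_frac[OF p st(1) st2(2)])
    apply (rule frac_eqI[OF p st2(3) st2(4)])
    by (simp add: algebra_simps)
qed

lemma la_comm: "x \<in> loc_carrier p \<Longrightarrow> y \<in> loc_carrier p \<Longrightarrow> loc_add p x y = loc_add p y x"
proof (elim loc_carrierE)
  fix a s b t assume st: "s \<notin> p" "t \<notin> p" and xyz: "x = frac p a s" "y = frac p b t"
  have st2: "s * t \<notin> p" "t * s \<notin> p" using st pm by auto
  show ?thesis unfolding xyz
    apply (subst loc_add_frac[OF p st(1) st(2)])
    apply (subst loc_add_frac[OF p st(2) st(1)])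
    apply (rule frac_eqI[OF p st2(1) st2(2)])
    by (simp add: algebra_simps)
qed

lemma lm_comm: "x \<in> loc_carrier p \<Longrightarrow> y \<in> loc_carrier p \<Longrightarrow> loc_mult p x y = loc_mult p y x"
proof (elim loc_carrierE)
  fix a s b t assume st: "s \<notin> p" "t \<notin> p" and xyz: "x = frac p a s" "y = frac p b t"
  have st2: "s * t \<notin> p" "t * s \<notin> p" using st pm by auto
  show ?thesis unfolding xyz
    apply (subst loc_mult_frac[OF p st(1) st(2)])
    apply (subst loc_mult_frac[OF p st(2) st(1)])
    apply (rule frac_eqI[OF p st2(1) st2(2)])
    by (simp add: algebra_simps)
qed

lemma la_zero: "x \<in> loc_carrier p \<Longrightarrow> loc_add p (frac p 0 1) x = x"
proof (elim loc_carrierE)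
  fix a s assume st: "s \<notin> p" and xyz: "x = frac p a s"
  show ?thesis unfolding xyz
    apply (subst loc_add_frac[OF p p1 st(1)])
    by simp
qed

lemma lm_one: "x \<in> loc_carrier p \<Longrightarrow> loc_mult p (frac p 1 1) x = x"
proof (elim loc_carrierE)
  fix a s assume st: "s \<notin> p" and xyz: "x = frac p a s"
  show ?thesis unfolding xyz
    apply (subst loc_mult_frac[OF p p1 st(1)])
    by simp
qed

lemma l_distr: "x \<in> loc_carrier p \<Longrightarrow> y \<in> loc_carrier p \<Longrightarrow> z \<in> loc_carrier p \<Longrightarrow>
    loc_mult p (loc_add p x y) z = loc_add p (loc_mult p x z) (loc_mult p y z)"
proof (elim loc_carrierE)
  fix a s b t c w assume st: "s \<notin> p" "t \<notin> p" "w \<notin> p" and xyz: "x = frac p a s" "y = frac p b t" "z = frac p c w"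
  have st2: "s * t \<notin> p" "s * w \<notin> p" "t * w \<notin> p" "s * t * w \<notin> p" "s * w * (t * w) \<notin> p" using st pm by auto
  show ?thesis unfolding xyz
    apply (subst loc_add_frac[OF p st(1) st(2)])
    apply (subst loc_mult_frac[OF p st2(1) st(3)])
    apply (subst loc_mult_frac[OF p st(1) st(3)])
    apply (subst loc_mult_frac[OF p st(2) st(3)])
    apply (subst loc_add_frac[OF p st2(2) st2(3)])
    apply (rule frac_eqI[OF p st2(4) st2(5)])
    by (simp add: algebra_simps)
qed

lemma la_neg: "x \<in> loc_carrier p \<Longrightarrow> loc_add p (loc_mult p (frac p (-1) 1) x) x = frac p 0 1"
proof (elim loc_carrierE)
  fix a s assume st: "s \<notin> p" and xyz: "x = frac p a s"
  have st2: "1 * s \<notin> p" "1 * s * s \<notin> p" using st pm by auto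
  show ?thesis unfolding xyz
    apply (subst loc_mult_frac[OF p p1 st(1)])
    apply (subst loc_add_frac[OF p st2(1) st(1)])
    apply (rule frac_eqI[OF p st2(2) p1])
    by (simp add: algebra_simps)
qed

lemma zero_in: "frac p 0 1 \<in> loc_carrier p" using frac_in_carrier p1 by blast
lemma one_in: "frac p 1 1 \<in> loc_carrier p" using frac_in_carrier p1 by blast
lemma mone_in: "frac p (-1) 1 \<in> loc_carrier p" using frac_in_carrier p1 by blast

lemmas lr_simps = loc_ring_def ring.simps monoid.simps partial_object.simps

lemma loc_ring_cring: "cring (loc_ring p)"
  apply (rule cringI)
    apply (rule abelian_groupI)
         apply (simp_all only: lr_simps)
         apply (erule (1) la_closed)
        apply (rule zero_in)
       apply (erule (2) la_assoc)
      apply (erule (1) la_comm)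
     apply (erule la_zero)
    apply (rule_tac x="loc_mult p (frac p (-1) 1) x" in bexI)
     apply (erule la_neg)
    apply (erule lm_closed[OF mone_in])
   apply (rule comm_monoidI)
       apply (simp_all only: lr_simps)
       apply (erule (1) lm_closed)
      apply (rule one_in)
     apply (erule (2) lm_assoc)
    apply (erule lm_one)
   apply (erule (1) lm_comm)
  apply (erule (2) l_distr)
  done


definition mm :: "('a \<times> 'a) set set" where "mm = {frac p a s | a s. a \<in> p \<and> s \<notin> p}"

lemma mm_frac: assumes "s \<notin> p" shows "frac p a s \<in> mm \<longleftrightarrow> a \<in> p"
proof
  assume "frac p a s \<in> mm"
  then obtain b t where bt: "b \<in> p" "t \<notin> p" "frac p a s = frac p b t" unfolding mm_def by blast
  then obtain u where u: "u \<notin> p" "u * (a * t - b * s) = 0" using frac_eq[OF p assms bt(2)] by blast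
  then have "a * t - b * s \<in> p" using prim_prime[OF p, of u "a * t - b * s"] prim_zero[OF p] by auto
  moreover have "b * s \<in> p" using bt prim_rmult[OF p] by blast
  ultimately have "a * t \<in> p" using prim_add[OF p, of "a * t - b * s" "b * s"] by simp
  then show "a \<in> p" using prim_prime[OF p] bt(2) by blast
qed (use assms in \<open>auto simp: mm_def\<close>)

lemma mm_sub: "mm \<subseteq> loc_carrier p" unfolding mm_def loc_carrier_def by blast

lemma one_notin_mm: "frac p 1 1 \<notin> mm" using mm_frac[OF p1] p1 by blast

lemma mm_ideal: "ideal mm (loc_ring p)"
proof -
  interpret cring "loc_ring p" by (rule loc_ring_cring)
  have lmul: "x \<otimes>\<^bsub>loc_ring p\<^esub> a \<in> mm" if ha: "a \<in> mm" and hx: "x \<in> carrier (loc_ring p)" for a x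
  proof -
    obtain b t where "a = frac p b t" "b \<in> p" "t \<notin> p" using ha unfolding mm_def by blast
    moreover obtain c w where "x = frac p c w" "w \<notin> p" using hx unfolding lr_simps loc_carrier_iff by blast
    ultimately show ?thesis unfolding lr_simps
      by (simp add: loc_mult_frac[OF p] mm_frac pm prim_lmult[OF p])
  qed
  have addc: "x \<oplus>\<^bsub>loc_ring p\<^esub> a \<in> mm" if ha: "a \<in> mm" and hx: "x \<in> mm" for a x
  proof -
    obtain b t where "a = frac p b t" "b \<in> p" "t \<notin> p" using ha unfolding mm_def by blast
    moreover obtain c w where "x = frac p c w" "c \<in> p" "w \<notin> p" using hx unfolding mm_def by blast
    ultimately show ?thesis unfolding lr_simps
      by (simp add: loc_add_frac[OF p] mm_frac pm prim_lmult[OF p] prim_rmult[OF p] prim_add[OF p])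
  qed
  have sub: "mm \<subseteq> carrier (loc_ring p)" using mm_sub unfolding lr_simps .
  have neg: "\<ominus>\<^bsub>loc_ring p\<^esub> a \<in> mm" if "a \<in> mm" for a
  proof -
    have ac: "a \<in> carrier (loc_ring p)" using that sub by blast
    have "\<ominus>\<^bsub>loc_ring p\<^esub> a = (\<ominus>\<^bsub>loc_ring p\<^esub> \<one>\<^bsub>loc_ring p\<^esub>) \<otimes>\<^bsub>loc_ring p\<^esub> a"
      using l_minus[OF one_closed ac] l_one[OF ac] by simp
    then show ?thesis using lmul[OF that] by simp
  qed
  have z: "\<zero>\<^bsub>loc_ring p\<^esub> \<in> mm" unfolding lr_simps using mm_frac[OF p1] prim_zero[OF p] by blast
  show ?thesis
  proof (rule idealI)
    show "ring (loc_ring p)" by (rule ring_axioms)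
    show "subgroup mm (add_monoid (loc_ring p))"
      apply (rule add.subgroupI)
      using sub apply simp
      using z apply blast
      using neg apply (simp add: a_inv_def)
      using addc apply simp
      done
    fix a x assume ax: "a \<in> mm" "x \<in> carrier (loc_ring p)"
    show "x \<otimes>\<^bsub>loc_ring p\<^esub> a \<in> mm" using lmul[OF ax] .
    have "a \<otimes>\<^bsub>loc_ring p\<^esub> x = x \<otimes>\<^bsub>loc_ring p\<^esub> a" using m_comm ax sub by blast
    then show "a \<otimes>\<^bsub>loc_ring p\<^esub> x \<in> mm" using lmul[OF ax] by simp
  qed
qed

lemma proper_ideal_sub: assumes "ideal J (loc_ring p)" "J \<noteq> carrier (loc_ring p)" shows "J \<subseteq> mm"
proof
  interpret ideal J "loc_ring p" by fact
  fix x assume x: "x \<in> J"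
  then have xc: "x \<in> loc_carrier p" using a_subset unfolding lr_simps by blast
  then obtain a s where as: "s \<notin> p" "x = frac p a s" by (rule loc_carrierE)
  show "x \<in> mm"
  proof (rule ccontr)
    assume "x \<notin> mm"
    then have a: "a \<notin> p" using as mm_frac by blast
    have "frac p s a \<otimes>\<^bsub>loc_ring p\<^esub> x \<in> J" using I_l_closed[OF x] frac_in_carrier[OF a] unfolding lr_simps by simp
    moreover have "frac p s a \<otimes>\<^bsub>loc_ring p\<^esub> x = \<one>\<^bsub>loc_ring p\<^esub>" unfolding lr_simps as
      by (simp add: loc_mult_frac[OF p a as(1)], rule frac_eqI[OF p], simp_all add: pm a as p1 mult.commute)
    ultimately show False using one_imp_carrier assms(2) by simp
  qed
qed

lemma mm_maximal: "maximalideal mm (loc_ring p)"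
proof (rule maximalidealI)
  show "ideal mm (loc_ring p)" by (rule mm_ideal)
  show "carrier (loc_ring p) \<noteq> mm" using one_notin_mm one_in unfolding lr_simps by blast
  fix J assume "ideal J (loc_ring p)" "mm \<subseteq> J" "J \<subseteq> carrier (loc_ring p)"
  then show "J = mm \<or> J = carrier (loc_ring p)" using proper_ideal_sub by blast
qed

lemma loc_ring_local: "local_ring (loc_ring p)"
  unfolding local_ring_def
proof (intro conjI ex1I)
  show "cring (loc_ring p)" by (rule loc_ring_cring)
  show "maximalideal mm (loc_ring p)" by (rule mm_maximal)
  fix I assume "maximalideal I (loc_ring p)"
  then interpret maximalideal I "loc_ring p" .
  have "I \<subseteq> mm" using proper_ideal_sub is_ideal I_notcarr by metis
  then show "I = mm" using I_maximal[OF mm_ideal] mm_sub one_notin_mm one_in unfolding lr_simps by blast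
qed

end



lemma iso_maximal_vimage:
  assumes A: "ring A" and B: "ring B" and h: "h \<in> ring_iso A B" and J: "maximalideal J B"
  shows "maximalideal {r \<in> carrier A. h r \<in> J} A"
proof -
  interpret hr: ring_hom_ring A B h using ring_hom_ringI2[OF A B] h unfolding ring_iso_def by blast
  interpret mJ: maximalideal J B by fact
  define g where "g = inv_into (carrier A) h"
  have g: "g \<in> ring_iso B A" unfolding g_def by (rule ring_iso_set_sym[OF A h])
  interpret gr: ring_hom_ring B A g using ring_hom_ringI2[OF B A] g unfolding ring_iso_def by blast
  have bij: "bij_betw h (carrier A) (carrier B)" using h unfolding ring_iso_def by blast
  have gh: "g (h a) = a" if "a \<in> carrier A" for a
    unfolding g_def using bij that by (simp add: bij_betw_def inv_into_f_f)
  have hg: "h (g b) = b" if "b \<in> carrier B" for b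
    unfolding g_def using bij that by (simp add: bij_betw_def f_inv_into_f)
  have hc: "h a \<in> carrier B" if "a \<in> carrier A" for a using bij that by (simp add: bij_betwE)
  have gc: "g b \<in> carrier A" if "b \<in> carrier B" for b using g that unfolding ring_iso_def by (simp add: bij_betwE)
  show ?thesis
  proof (rule maximalidealI)
    show "ideal {r \<in> carrier A. h r \<in> J} A" by (rule hr.ideal_vimage[OF mJ.is_ideal])
    show "carrier A \<noteq> {r \<in> carrier A. h r \<in> J}"
    proof
      assume "carrier A = {r \<in> carrier A. h r \<in> J}"
      then have "h \<one>\<^bsub>A\<^esub> \<in> J" using ring.ring_simprules(6)[OF A] by blast
      then show False using mJ.I_notcarr mJ.one_imp_carrier hr.hom_one by simp
    qed
    fix K assume K: "ideal K A" "{r \<in> carrier A. h r \<in> J} \<subseteq> K" "K \<subseteq> carrier A"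
    have KB: "ideal {b \<in> carrier B. g b \<in> K} B" by (rule gr.ideal_vimage[OF K(1)])
    have "J \<subseteq> {b \<in> carrier B. g b \<in> K}"
    proof
      fix b assume b: "b \<in> J"
      then have bc: "b \<in> carrier B" using mJ.a_subset by blast
      then have "g b \<in> {r \<in> carrier A. h r \<in> J}" using gc hg b by simp
      then show "b \<in> {b \<in> carrier B. g b \<in> K}" using K(2) bc by blast
    qed
    then have "{b \<in> carrier B. g b \<in> K} = J \<or> {b \<in> carrier B. g b \<in> K} = carrier B"
      using mJ.I_maximal[OF KB] by blast
    then show "K = {r \<in> carrier A. h r \<in> J} \<or> K = carrier A"
    proof
      assume e: "{b \<in> carrier B. g b \<in> K} = J"
      have "K \<subseteq> {r \<in> carrier A. h r \<in> J}"
      proof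
        fix a assume a: "a \<in> K"
        then have ac: "a \<in> carrier A" using K(3) by blast
        then have "h a \<in> {b \<in> carrier B. g b \<in> K}" using hc gh a by simp
        then show "a \<in> {r \<in> carrier A. h r \<in> J}" using e ac by blast
      qed
      then show ?thesis using K(2) by blast
    next
      assume e: "{b \<in> carrier B. g b \<in> K} = carrier B"
      have "carrier A \<subseteq> K"
      proof
        fix a assume ac: "a \<in> carrier A"
        then have "h a \<in> {b \<in> carrier B. g b \<in> K}" using e hc by blast
        then show "a \<in> K" using gh ac by simp
      qed
      then show ?thesis using K(3) by blast
    qed
  qed
qed

lemma ring_iso_sym_closed:
  assumes h: "h \<in> ring_iso A B"
    and ca: "\<And>x y. x \<in> carrier A \<Longrightarrow> y \<in> carrier A \<Longrightarrow> x \<oplus>\<^bsub>A\<^esub> y \<in> carrier A"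
    and cm: "\<And>x y. x \<in> carrier A \<Longrightarrow> y \<in> carrier A \<Longrightarrow> x \<otimes>\<^bsub>A\<^esub> y \<in> carrier A"
    and c1: "\<one>\<^bsub>A\<^esub> \<in> carrier A"
  shows "inv_into (carrier A) h \<in> ring_iso B A"
proof -
  define g where "g = inv_into (carrier A) h"
  have bij: "bij_betw h (carrier A) (carrier B)" using h unfolding ring_iso_def by blast
  have gbij: "bij_betw g (carrier B) (carrier A)" unfolding g_def by (rule bij_betw_inv_into[OF bij])
  have gc: "g x \<in> carrier A" if "x \<in> carrier B" for x using bij_betwE[OF gbij] that by blast
  have gh: "g (h a) = a" if "a \<in> carrier A" for a
    unfolding g_def using bij that by (simp add: bij_betw_def inv_into_f_f)
  have hg: "h (g b) = b" if "b \<in> carrier B" for b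
    unfolding g_def using bij that by (simp add: bij_betw_def f_inv_into_f)
  have "g \<in> ring_iso B A"
  proof (rule ring_iso_memI)
    fix x y assume x: "x \<in> carrier B" and y: "y \<in> carrier B"
    show "g x \<in> carrier A" by (rule gc[OF x])
    have "h (g x \<otimes>\<^bsub>A\<^esub> g y) = x \<otimes>\<^bsub>B\<^esub> y"
      using ring_iso_memE(2)[OF h gc[OF x] gc[OF y]] hg x y by simp
    then show "g (x \<otimes>\<^bsub>B\<^esub> y) = g x \<otimes>\<^bsub>A\<^esub> g y" using gh[OF cm[OF gc[OF x] gc[OF y]]] by simp
    have "h (g x \<oplus>\<^bsub>A\<^esub> g y) = x \<oplus>\<^bsub>B\<^esub> y"
      using ring_iso_memE(3)[OF h gc[OF x] gc[OF y]] hg x y by simp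
    then show "g (x \<oplus>\<^bsub>B\<^esub> y) = g x \<oplus>\<^bsub>A\<^esub> g y" using gh[OF ca[OF gc[OF x] gc[OF y]]] by simp
  next
    show "g \<one>\<^bsub>B\<^esub> = \<one>\<^bsub>A\<^esub>" using ring_iso_memE(4)[OF h] gh[OF c1] by simp
    show "bij_betw g (carrier B) (carrier A)" by (rule gbij)
  qed
  then show ?thesis unfolding g_def .
qed

lemma local_ring_iso:
  assumes B: "cring B" and h: "h \<in> ring_iso A B" and L: "local_ring B"
     and z: "h \<zero>\<^bsub>A\<^esub> = \<zero>\<^bsub>B\<^esub>" and zc: "\<zero>\<^bsub>A\<^esub> \<in> carrier A"
    and ca: "\<And>x y. x \<in> carrier A \<Longrightarrow> y \<in> carrier A \<Longrightarrow> x \<oplus>\<^bsub>A\<^esub> y \<in> carrier A"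
    and cm: "\<And>x y. x \<in> carrier A \<Longrightarrow> y \<in> carrier A \<Longrightarrow> x \<otimes>\<^bsub>A\<^esub> y \<in> carrier A"
    and c1: "\<one>\<^bsub>A\<^esub> \<in> carrier A"
  shows "local_ring A"
proof -
  have Br: "ring B" using B cring.axioms(1) by blast
  define g where "g = inv_into (carrier A) h"
  have g: "g \<in> ring_iso B A" unfolding g_def by (rule ring_iso_sym_closed[OF h ca cm c1])
  have bij: "bij_betw h (carrier A) (carrier B)" using h unfolding ring_iso_def by blast
  have gz: "g \<zero>\<^bsub>B\<^esub> = \<zero>\<^bsub>A\<^esub>"
    unfolding g_def z[symmetric] using bij zc
    by (simp add: bij_betw_def inv_into_f_f)
  have "cring (A\<lparr>zero := g \<zero>\<^bsub>B\<^esub>\<rparr>)" by (rule cring.ring_iso_imp_img_cring[OF B g])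
  then have cA: "cring A" using gz by simp
  then have A: "ring A" using cring.axioms(1) by blast
  from L obtain J where J: "maximalideal J B" and uJ: "\<And>J'. maximalideal J' B \<Longrightarrow> J' = J"
    unfolding local_ring_def by blast
  show ?thesis unfolding local_ring_def
  proof (intro conjI ex1I)
    show "cring A" by (rule cA)
    show "maximalideal {r \<in> carrier A. h r \<in> J} A" by (rule iso_maximal_vimage[OF A Br h J])
    fix I assume I: "maximalideal I A"
    then have "maximalideal {b \<in> carrier B. g b \<in> I} B" by (rule iso_maximal_vimage[OF Br A g])
    then have e: "{b \<in> carrier B. g b \<in> I} = J" by (rule uJ)
    have Ic: "I \<subseteq> carrier A" using I maximalideal.axioms(1) ideal.axioms(1) additive_subgroup.a_subset by blast
    have gh: "g (h a) = a" if "a \<in> carrier A" for a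
      unfolding g_def using bij that by (simp add: bij_betw_def inv_into_f_f)
    have hc: "h a \<in> carrier B" if "a \<in> carrier A" for a using bij that by (simp add: bij_betwE)
    show "I = {r \<in> carrier A. h r \<in> J}"
      unfolding e[symmetric] using Ic gh hc by auto
  qed
qed




context fixes sc :: "'a::comm_ring_1 \<Rightarrow> 'm::ab_group_add \<Rightarrow> 'm" assumes msc: "module sc"
begin

interpretation M: module sc by (rule msc)

lemma colon_mono: "L \<subseteq> P \<Longrightarrow> colon sc L \<subseteq> colon sc P"
  unfolding colon_def by blast

lemma colon_prim: assumes "P \<in> Spec sc" shows "prim (colon sc P)"
proof -
  have sub: "M.subspace P" and ne: "P \<noteq> UNIV" and pr: "\<And>r m. sc r m \<in> P \<Longrightarrow> r \<in> colon sc P \<or> m \<in> P"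
    using assms unfolding Spec_def prime_submodule_def by auto
  have "1 \<notin> colon sc P" using ne unfolding colon_def by auto
  moreover have "0 \<in> colon sc P" unfolding colon_def using M.subspace_0[OF sub] by simp
  moreover have "a + b \<in> colon sc P" if "a \<in> colon sc P" "b \<in> colon sc P" for a b
  proof -
    have "sc (a + b) m \<in> P" for m
      using that M.subspace_add[OF sub] unfolding colon_def M.scale_left_distrib by blast
    then show ?thesis unfolding colon_def by blast
  qed
  moreover have "r * a \<in> colon sc P" if "a \<in> colon sc P" for r a
  proof -
    have "sc (r * a) m \<in> P" for m
      using that M.subspace_scale[OF sub] unfolding colon_def M.scale_scale[symmetric] by blast
    then show ?thesis unfolding colon_def by blast
  qed
  moreover have "a \<in> colon sc P \<or> b \<in> colon sc P" if "a * b \<in> colon sc P" for a b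
  proof (rule disjCI)
    assume "b \<notin> colon sc P"
    then obtain m where m: "sc b m \<notin> P" unfolding colon_def by blast
    have "sc a (sc b m) \<in> P" using that unfolding colon_def M.scale_scale by blast
    then show "a \<in> colon sc P" using pr m by blast
  qed
  ultimately show ?thesis unfolding prim_def by blast
qed

lemma colon_Int: "colon sc (L \<inter> N) = colon sc L \<inter> colon sc N"
  unfolding colon_def by blast

lemma zopen_sub: "zopen sc U \<Longrightarrow> U \<subseteq> Spec sc"
  unfolding zopen_def by blast

lemma zopen_ex: assumes "zopen sc U" shows "\<exists>L. M.subspace L \<and> (\<forall>P. P \<in> U \<longleftrightarrow> P \<in> Spec sc \<and> \<not> colon sc L \<subseteq> colon sc P)"
proof -
  from assms obtain L where L: "M.subspace L" "U = Spec sc - VV sc L" unfolding zopen_def by blast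
  then show ?thesis by (auto simp: VV_def)
qed

lemma zopen_sat: "zopen sc U \<Longrightarrow> P \<in> U \<Longrightarrow> P' \<in> Spec sc \<Longrightarrow> colon sc P' = colon sc P \<Longrightarrow> P' \<in> U"
proof -
  assume a: "zopen sc U" "P \<in> U" "P' \<in> Spec sc" "colon sc P' = colon sc P"
  obtain L where "\<And>P. P \<in> U \<longleftrightarrow> P \<in> Spec sc \<and> \<not> colon sc L \<subseteq> colon sc P"
    using zopen_ex[OF a(1)] by blast
  then show "P' \<in> U" using a by metis
qed

lemma zopen_Int: assumes "zopen sc U" "zopen sc V" shows "zopen sc (U \<inter> V)"
proof -
  obtain L where L: "M.subspace L" "\<And>P. P \<in> U \<longleftrightarrow> P \<in> Spec sc \<and> \<not> colon sc L \<subseteq> colon sc P"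
    using zopen_ex[OF assms(1)] by blast
  obtain N where N: "M.subspace N" "\<And>P. P \<in> V \<longleftrightarrow> P \<in> Spec sc \<and> \<not> colon sc N \<subseteq> colon sc P"
    using zopen_ex[OF assms(2)] by blast
  have "U \<inter> V = Spec sc - VV sc (L \<inter> N)"
  proof (intro equalityI subsetI)
    fix P assume P: "P \<in> U \<inter> V"
    then obtain a b where ab: "a \<in> colon sc L" "a \<notin> colon sc P" "b \<in> colon sc N" "b \<notin> colon sc P"
      using L N by blast
    have "sc (a * b) m \<in> L" for m using ab(1) unfolding colon_def M.scale_scale[symmetric] by blast
    moreover have "sc (a * b) m \<in> N" for m using ab(3) unfolding colon_def mult.commute[of a b] M.scale_scale[symmetric] by blast
    ultimately have "a * b \<in> colon sc (L \<inter> N)" unfolding colon_def by blast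
    moreover have "a * b \<notin> colon sc P" using ab prim_prime[OF colon_prim] P L by blast
    ultimately show "P \<in> Spec sc - VV sc (L \<inter> N)" using P L unfolding VV_def by blast
  next
    fix P assume "P \<in> Spec sc - VV sc (L \<inter> N)"
    then show "P \<in> U \<inter> V" using L N unfolding VV_def colon_Int by blast
  qed
  then show ?thesis unfolding zopen_def using M.subspace_inter[OF L(1) N(1)] by blast
qed

lemma zopen_Spec: "zopen sc (Spec sc)"
proof -
  have "VV sc UNIV = {}" unfolding VV_def colon_def using colon_prim prim_one unfolding colon_def by fastforce
  then show ?thesis unfolding zopen_def by (intro exI[of _ UNIV]) simp
qed

lemma zopen_empty: "zopen sc {}"
proof -
  have "VV sc {0} = Spec sc" unfolding VV_def colon_def
    using M.subspace_0 unfolding Spec_def prime_submodule_def by fastforce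
  then show ?thesis unfolding zopen_def by (intro exI[of _ "{0}"]) simp
qed

lemma zopen_Union: assumes "\<forall>U\<in>\<U>. zopen sc U" shows "zopen sc (\<Union>\<U>)"
proof -
  have "\<forall>U\<in>\<U>. \<exists>L. M.subspace L \<and> U = Spec sc - VV sc L" using assms unfolding zopen_def by blast
  then obtain Lf where Lf: "\<And>U. U \<in> \<U> \<Longrightarrow> M.subspace (Lf U) \<and> U = Spec sc - VV sc (Lf U)" by metis
  define G where "G = {sc r m | r m. \<exists>U\<in>\<U>. r \<in> colon sc (Lf U)}"
  define L where "L = M.span G"
  have key: "colon sc L \<subseteq> colon sc P \<longleftrightarrow> (\<forall>U\<in>\<U>. colon sc (Lf U) \<subseteq> colon sc P)" if P: "P \<in> Spec sc" for P
  proof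
    assume h: "colon sc L \<subseteq> colon sc P"
    show "\<forall>U\<in>\<U>. colon sc (Lf U) \<subseteq> colon sc P"
    proof (intro ballI subsetI)
      fix U r assume "U \<in> \<U>" "r \<in> colon sc (Lf U)"
      then have "\<forall>m. sc r m \<in> G" unfolding G_def by blast
      then have "r \<in> colon sc L" unfolding L_def colon_def using M.span_base by blast
      then show "r \<in> colon sc P" using h by blast
    qed
  next
    assume h: "\<forall>U\<in>\<U>. colon sc (Lf U) \<subseteq> colon sc P"
    have "G \<subseteq> P" unfolding G_def using h unfolding colon_def by blast
    moreover have "M.subspace P" using P unfolding Spec_def prime_submodule_def by blast
    ultimately have "L \<subseteq> P" unfolding L_def by (rule M.span_minimal)
    then show "colon sc L \<subseteq> colon sc P" by (rule colon_mono)
  qed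
  have "\<Union>\<U> = Spec sc - VV sc L"
  proof (intro equalityI subsetI)
    fix P assume "P \<in> \<Union>\<U>"
    then obtain U where U: "U \<in> \<U>" "P \<in> U" by blast
    then have "P \<in> Spec sc" "\<not> colon sc (Lf U) \<subseteq> colon sc P" using Lf[OF U(1)] unfolding VV_def by auto
    then show "P \<in> Spec sc - VV sc L" using key U unfolding VV_def by blast
  next
    fix P assume P: "P \<in> Spec sc - VV sc L"
    then obtain U where "U \<in> \<U>" "\<not> colon sc (Lf U) \<subseteq> colon sc P" using key unfolding VV_def by blast
    then show "P \<in> \<Union>\<U>" using Lf P unfolding VV_def by blast
  qed
  then show ?thesis unfolding zopen_def L_def by blast
qed

lemma topology: "is_topology_on (Spec sc) (zopen sc)"
  unfolding is_topology_on_def using zopen_sub zopen_empty zopen_Spec zopen_Int zopen_Union by blast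

definition Dset :: "'a \<Rightarrow> 'm set set" where "Dset f = {P \<in> Spec sc. f \<notin> colon sc P}"

lemma zopen_D: "zopen sc (Dset f)"
proof -
  have sub: "M.subspace (range (sc f))"
    unfolding M.subspace_def
  proof (intro conjI ballI allI)
    show "0 \<in> range (sc f)" using M.scale_zero_right[of f] by (metis rangeI)
    fix x y assume "x \<in> range (sc f)" "y \<in> range (sc f)"
    then obtain u v where "x = sc f u" "y = sc f v" by blast
    then show "x + y \<in> range (sc f)" using M.scale_right_distrib[of f u v] by (metis rangeI)
  next
    fix c x assume "x \<in> range (sc f)"
    then obtain u where "x = sc f u" by blast
    then show "sc c x \<in> range (sc f)" using M.scale_left_commute[of c f u] by (metis rangeI)
  qed
  have "Dset f = Spec sc - VV sc (range (sc f))"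
  proof (intro equalityI subsetI)
    fix P assume "P \<in> Dset f"
    moreover have "f \<in> colon sc (range (sc f))" unfolding colon_def by blast
    ultimately show "P \<in> Spec sc - VV sc (range (sc f))" unfolding Dset_def VV_def by blast
  next
    fix P assume P: "P \<in> Spec sc - VV sc (range (sc f))"
    show "P \<in> Dset f"
    proof (unfold Dset_def, intro CollectI conjI)
      show "P \<in> Spec sc" using P by blast
      show "f \<notin> colon sc P"
      proof
        assume "f \<in> colon sc P"
        then have "range (sc f) \<subseteq> P" unfolding colon_def by blast
        then show False using P colon_mono unfolding VV_def by blast
      qed
    qed
  qed
  then show ?thesis unfolding zopen_def using sub by blast
qed

end



context fixes sc :: "'a::comm_ring_1 \<Rightarrow> 'm::ab_group_add \<Rightarrow> 'm" assumes msc: "module sc"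
begin

lemma supp_iff: "q \<in> Supp sc U \<longleftrightarrow> (\<exists>P\<in>U. q = colon sc P)"
  unfolding Supp_def by blast

lemma supp_prim: "zopen sc U \<Longrightarrow> q \<in> Supp sc U \<Longrightarrow> prim q"
  unfolding supp_iff using colon_prim[OF msc] zopen_sub[OF msc] by blast

lemma supp_colon: "P \<in> U \<Longrightarrow> colon sc P \<in> Supp sc U"
  unfolding supp_iff by blast

lemma supp_mono: "V \<subseteq> U \<Longrightarrow> Supp sc V \<subseteq> Supp sc U"
  unfolding Supp_def by blast

lemma sec_parts: "\<gamma> \<in> sections sc U \<longleftrightarrow> (\<forall>p. p \<notin> Supp sc U \<longrightarrow> \<gamma> p = {}) \<and>
      (\<forall>p \<in> Supp sc U. \<gamma> p \<in> loc_carrier p) \<and>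
      (\<forall>Q \<in> U. \<exists>W. zopen sc W \<and> Q \<in> W \<and> W \<subseteq> U \<and>
          (\<exists>a s. \<forall>P \<in> W. s \<notin> colon sc P \<and> \<gamma> (colon sc P) = frac (colon sc P) a s))"
  unfolding sections_def by (rule mem_Collect_eq)

lemma sec_out: assumes "\<gamma> \<in> sections sc U" "q \<notin> Supp sc U" shows "\<gamma> q = {}"
  using spec[OF conjunct1[OF assms(1)[unfolded sec_parts]], of q] assms(2) by (rule mp)

lemma sec_val: assumes "\<gamma> \<in> sections sc U" "q \<in> Supp sc U" shows "\<gamma> q \<in> loc_carrier q"
  by (rule bspec[OF conjunct1[OF conjunct2[OF assms(1)[unfolded sec_parts]]] assms(2)])

lemma sec_loc: assumes "\<gamma> \<in> sections sc U" "Q \<in> U" shows "\<exists>W a s. zopen sc W \<and> Q \<in> W \<and> W \<subseteq> U \<and>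
   (\<forall>P\<in>W. s \<notin> colon sc P \<and> \<gamma> (colon sc P) = frac (colon sc P) a s)"
proof -
  from bspec[OF conjunct2[OF conjunct2[OF assms(1)[unfolded sec_parts]]] assms(2)]
  obtain W a s where "zopen sc W" "Q \<in> W" "W \<subseteq> U" "\<forall>P\<in>W. s \<notin> colon sc P \<and> \<gamma> (colon sc P) = frac (colon sc P) a s"
    by blast
  then show ?thesis by blast
qed

lemma sectionsI:
  assumes "\<And>q. q \<notin> Supp sc U \<Longrightarrow> \<gamma> q = {}"
    and "\<And>q. q \<in> Supp sc U \<Longrightarrow> \<gamma> q \<in> loc_carrier q"
    and "\<And>Q. Q \<in> U \<Longrightarrow> \<exists>W a s. zopen sc W \<and> Q \<in> W \<and> W \<subseteq> U \<and>
   (\<forall>P\<in>W. s \<notin> colon sc P \<and> \<gamma> (colon sc P) = frac (colon sc P) a s)"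
  shows "\<gamma> \<in> sections sc U"
proof -
  have "\<exists>W. zopen sc W \<and> Q \<in> W \<and> W \<subseteq> U \<and>
          (\<exists>a s. \<forall>P \<in> W. s \<notin> colon sc P \<and> \<gamma> (colon sc P) = frac (colon sc P) a s)" if "Q \<in> U" for Q
  proof -
    from assms(3)[OF that] obtain W a s where "zopen sc W" "Q \<in> W" "W \<subseteq> U"
       "\<forall>P\<in>W. s \<notin> colon sc P \<and> \<gamma> (colon sc P) = frac (colon sc P) a s"
      by blast
    then show ?thesis by blast
  qed
  then show ?thesis unfolding sec_parts using assms(1,2) by (intro conjI allI impI ballI)
qed

definition csec :: "'m set set \<Rightarrow> 'a \<Rightarrow> 'a \<Rightarrow> 'a set \<Rightarrow> ('a \<times> 'a) set" where
  "csec U a s = (\<lambda>q. if q \<in> Supp sc U then frac q a s else {})"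

lemma csec_mem: assumes U: "zopen sc U" and s: "\<forall>P\<in>U. s \<notin> colon sc P"
  shows "csec U a s \<in> sections sc U"
proof (rule sectionsI)
  fix q assume "q \<in> Supp sc U"
  then show "csec U a s q \<in> loc_carrier q" unfolding csec_def using s frac_in_carrier supp_iff by fastforce
next
  fix Q assume "Q \<in> U"
  have "\<forall>P\<in>U. s \<notin> colon sc P \<and> csec U a s (colon sc P) = frac (colon sc P) a s"
    using s supp_colon unfolding csec_def by simp
  then show "\<exists>W a' s'. zopen sc W \<and> Q \<in> W \<and> W \<subseteq> U \<and>
     (\<forall>P\<in>W. s' \<notin> colon sc P \<and> csec U a s (colon sc P) = frac (colon sc P) a' s')"
    using U \<open>Q \<in> U\<close> by (intro exI[of _ U] exI[of _ a] exI[of _ s]) simp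
qed (simp add: csec_def)

lemma one_not_colon: "zopen sc U \<Longrightarrow> \<forall>P\<in>U. 1 \<notin> colon sc P"
  using colon_prim[OF msc] prim_one zopen_sub[OF msc] by blast

lemmas sr_simps = sec_ring_def ring.simps monoid.simps partial_object.simps

lemma sec_add_mem: assumes U: "zopen sc U" and g: "\<gamma> \<in> sections sc U" and d: "\<delta> \<in> sections sc U"
  shows "(\<lambda>q. if q \<in> Supp sc U then loc_add q (\<gamma> q) (\<delta> q) else {}) \<in> sections sc U"
proof (rule sectionsI)
  fix q assume "q \<in> Supp sc U"
  then show "(if q \<in> Supp sc U then loc_add q (\<gamma> q) (\<delta> q) else {}) \<in> loc_carrier q"
    by (simp add: la_closed supp_prim[OF U] sec_val[OF g] sec_val[OF d])
next
  fix Q assume Q: "Q \<in> U"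
  obtain W1 a s where W1: "zopen sc W1" "Q \<in> W1" "W1 \<subseteq> U" "\<forall>P\<in>W1. s \<notin> colon sc P \<and> \<gamma> (colon sc P) = frac (colon sc P) a s"
    using sec_loc[OF g Q] by blast
  obtain W2 b t where W2: "zopen sc W2" "Q \<in> W2" "W2 \<subseteq> U" "\<forall>P\<in>W2. t \<notin> colon sc P \<and> \<delta> (colon sc P) = frac (colon sc P) b t"
    using sec_loc[OF d Q] by blast
  have "\<forall>P\<in>W1 \<inter> W2. s * t \<notin> colon sc P \<and> (if colon sc P \<in> Supp sc U then loc_add (colon sc P) (\<gamma> (colon sc P)) (\<delta> (colon sc P)) else {})
       = frac (colon sc P) (a * t + b * s) (s * t)"
  proof
    fix P assume P: "P \<in> W1 \<inter> W2"
    then have pr: "prim (colon sc P)" using W1(3) supp_prim[OF U] supp_colon by blast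
    show "s * t \<notin> colon sc P \<and> (if colon sc P \<in> Supp sc U then loc_add (colon sc P) (\<gamma> (colon sc P)) (\<delta> (colon sc P)) else {})
       = frac (colon sc P) (a * t + b * s) (s * t)"
    proof -
      have "colon sc P \<in> Supp sc U" using P W1(3) supp_colon by blast
      moreover have "s \<notin> colon sc P" "\<gamma> (colon sc P) = frac (colon sc P) a s" using P W1(4) by auto
      moreover have "t \<notin> colon sc P" "\<delta> (colon sc P) = frac (colon sc P) b t" using P W2(4) by auto
      ultimately show ?thesis by (simp add: loc_add_frac[OF pr] pm[OF pr])
    qed
  qed
  then show "\<exists>W a s. zopen sc W \<and> Q \<in> W \<and> W \<subseteq> U \<and>
     (\<forall>P\<in>W. s \<notin> colon sc P \<and> (if colon sc P \<in> Supp sc U then loc_add (colon sc P) (\<gamma> (colon sc P)) (\<delta> (colon sc P)) else {}) = frac (colon sc P) a s)"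
    using W1 W2 zopen_Int[OF msc W1(1) W2(1)] by (intro exI[of _ "W1 \<inter> W2"] exI[of _ "a * t + b * s"] exI[of _ "s * t"]) blast
qed simp

lemma sec_mult_mem: assumes U: "zopen sc U" and g: "\<gamma> \<in> sections sc U" and d: "\<delta> \<in> sections sc U"
  shows "(\<lambda>q. if q \<in> Supp sc U then loc_mult q (\<gamma> q) (\<delta> q) else {}) \<in> sections sc U"
proof (rule sectionsI)
  fix q assume "q \<in> Supp sc U"
  then show "(if q \<in> Supp sc U then loc_mult q (\<gamma> q) (\<delta> q) else {}) \<in> loc_carrier q"
    by (simp add: lm_closed supp_prim[OF U] sec_val[OF g] sec_val[OF d])
next
  fix Q assume Q: "Q \<in> U"
  obtain W1 a s where W1: "zopen sc W1" "Q \<in> W1" "W1 \<subseteq> U" "\<forall>P\<in>W1. s \<notin> colon sc P \<and> \<gamma> (colon sc P) = frac (colon sc P) a s"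
    using sec_loc[OF g Q] by blast
  obtain W2 b t where W2: "zopen sc W2" "Q \<in> W2" "W2 \<subseteq> U" "\<forall>P\<in>W2. t \<notin> colon sc P \<and> \<delta> (colon sc P) = frac (colon sc P) b t"
    using sec_loc[OF d Q] by blast
  have "\<forall>P\<in>W1 \<inter> W2. s * t \<notin> colon sc P \<and> (if colon sc P \<in> Supp sc U then loc_mult (colon sc P) (\<gamma> (colon sc P)) (\<delta> (colon sc P)) else {})
       = frac (colon sc P) (a * b) (s * t)"
  proof
    fix P assume P: "P \<in> W1 \<inter> W2"
    then have pr: "prim (colon sc P)" using W1(3) supp_prim[OF U] supp_colon by blast
    show "s * t \<notin> colon sc P \<and> (if colon sc P \<in> Supp sc U then loc_mult (colon sc P) (\<gamma> (colon sc P)) (\<delta> (colon sc P)) else {})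
       = frac (colon sc P) (a * b) (s * t)"
    proof -
      have "colon sc P \<in> Supp sc U" using P W1(3) supp_colon by blast
      moreover have "s \<notin> colon sc P" "\<gamma> (colon sc P) = frac (colon sc P) a s" using P W1(4) by auto
      moreover have "t \<notin> colon sc P" "\<delta> (colon sc P) = frac (colon sc P) b t" using P W2(4) by auto
      ultimately show ?thesis by (simp add: loc_mult_frac[OF pr] pm[OF pr])
    qed
  qed
  then show "\<exists>W a s. zopen sc W \<and> Q \<in> W \<and> W \<subseteq> U \<and>
     (\<forall>P\<in>W. s \<notin> colon sc P \<and> (if colon sc P \<in> Supp sc U then loc_mult (colon sc P) (\<gamma> (colon sc P)) (\<delta> (colon sc P)) else {}) = frac (colon sc P) a s)"
    using W1 W2 zopen_Int[OF msc W1(1) W2(1)] by (intro exI[of _ "W1 \<inter> W2"] exI[of _ "a * b"] exI[of _ "s * t"]) blast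
qed simp


context fixes U assumes U: "zopen sc U"
begin

abbreviation "SR \<equiv> sec_ring sc U"

lemma sr_carrier: "carrier SR = sections sc U" unfolding sr_simps by simp

lemma sr_add: "x \<oplus>\<^bsub>SR\<^esub> y = (\<lambda>q. if q \<in> Supp sc U then loc_add q (x q) (y q) else {})" unfolding sr_simps by simp
lemma sr_mult: "x \<otimes>\<^bsub>SR\<^esub> y = (\<lambda>q. if q \<in> Supp sc U then loc_mult q (x q) (y q) else {})" unfolding sr_simps by simp
lemma sr_zero: "\<zero>\<^bsub>SR\<^esub> = csec U 0 1" unfolding sr_simps csec_def by simp
lemma sr_one: "\<one>\<^bsub>SR\<^esub> = csec U 1 1" unfolding sr_simps csec_def by simp

lemma sr_add_closed: "x \<in> carrier SR \<Longrightarrow> y \<in> carrier SR \<Longrightarrow> x \<oplus>\<^bsub>SR\<^esub> y \<in> carrier SR"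
  unfolding sr_carrier sr_add by (rule sec_add_mem[OF U])
lemma sr_mult_closed: "x \<in> carrier SR \<Longrightarrow> y \<in> carrier SR \<Longrightarrow> x \<otimes>\<^bsub>SR\<^esub> y \<in> carrier SR"
  unfolding sr_carrier sr_mult by (rule sec_mult_mem[OF U])
lemma sr_zero_closed: "\<zero>\<^bsub>SR\<^esub> \<in> carrier SR"
  unfolding sr_carrier sr_zero by (rule csec_mem[OF U one_not_colon[OF U]])
lemma sr_one_closed: "\<one>\<^bsub>SR\<^esub> \<in> carrier SR"
  unfolding sr_carrier sr_one by (rule csec_mem[OF U one_not_colon[OF U]])
lemma sr_mone_closed: "csec U (-1) 1 \<in> carrier SR"
  unfolding sr_carrier by (rule csec_mem[OF U one_not_colon[OF U]])

lemmas pr = supp_prim[OF U]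

lemma sr_add_assoc: assumes x: "x \<in> carrier SR" and y: "y \<in> carrier SR" and z: "z \<in> carrier SR"
  shows "(x \<oplus>\<^bsub>SR\<^esub> y) \<oplus>\<^bsub>SR\<^esub> z = x \<oplus>\<^bsub>SR\<^esub> (y \<oplus>\<^bsub>SR\<^esub> z)"
  using x y z unfolding sr_carrier sr_add
  by (intro ext) (simp add: la_assoc[OF pr] sec_val)

lemma sr_mult_assoc: assumes x: "x \<in> carrier SR" and y: "y \<in> carrier SR" and z: "z \<in> carrier SR"
  shows "(x \<otimes>\<^bsub>SR\<^esub> y) \<otimes>\<^bsub>SR\<^esub> z = x \<otimes>\<^bsub>SR\<^esub> (y \<otimes>\<^bsub>SR\<^esub> z)"
  using x y z unfolding sr_carrier sr_mult
  by (intro ext) (simp add: lm_assoc[OF pr] sec_val)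

lemma sr_add_comm: assumes x: "x \<in> carrier SR" and y: "y \<in> carrier SR"
  shows "x \<oplus>\<^bsub>SR\<^esub> y = y \<oplus>\<^bsub>SR\<^esub> x"
  using x y unfolding sr_carrier sr_add
  by (intro ext) (simp add: la_comm[OF pr] sec_val)

lemma sr_mult_comm: assumes x: "x \<in> carrier SR" and y: "y \<in> carrier SR"
  shows "x \<otimes>\<^bsub>SR\<^esub> y = y \<otimes>\<^bsub>SR\<^esub> x"
  using x y unfolding sr_carrier sr_mult
  by (intro ext) (simp add: lm_comm[OF pr] sec_val)

lemma sr_l_zero: assumes x: "x \<in> carrier SR" shows "\<zero>\<^bsub>SR\<^esub> \<oplus>\<^bsub>SR\<^esub> x = x"
  using x unfolding sr_carrier sr_add sr_zero csec_def
  by (intro ext) (simp add: la_zero[OF pr] sec_val sec_out)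

lemma sr_l_one: assumes x: "x \<in> carrier SR" shows "\<one>\<^bsub>SR\<^esub> \<otimes>\<^bsub>SR\<^esub> x = x"
  using x unfolding sr_carrier sr_mult sr_one csec_def
  by (intro ext) (simp add: lm_one[OF pr] sec_val sec_out)

lemma sr_l_distr: assumes x: "x \<in> carrier SR" and y: "y \<in> carrier SR" and z: "z \<in> carrier SR"
  shows "(x \<oplus>\<^bsub>SR\<^esub> y) \<otimes>\<^bsub>SR\<^esub> z = (x \<otimes>\<^bsub>SR\<^esub> z) \<oplus>\<^bsub>SR\<^esub> (y \<otimes>\<^bsub>SR\<^esub> z)"
  using x y z unfolding sr_carrier sr_mult sr_add
  by (intro ext) (simp add: l_distr[OF pr] sec_val)

lemma sr_l_neg: assumes x: "x \<in> carrier SR" shows "(csec U (-1) 1 \<otimes>\<^bsub>SR\<^esub> x) \<oplus>\<^bsub>SR\<^esub> x = \<zero>\<^bsub>SR\<^esub>"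
  using x unfolding sr_carrier sr_mult sr_add sr_zero csec_def
  by (intro ext) (simp add: la_neg[OF pr] sec_val)

lemma sr_cring: "cring SR"
  apply (rule cringI)
    apply (rule abelian_groupI)
         apply (erule (1) sr_add_closed)
        apply (rule sr_zero_closed)
       apply (erule (2) sr_add_assoc)
      apply (erule (1) sr_add_comm)
     apply (erule sr_l_zero)
    apply (rule_tac x="csec U (-1) 1 \<otimes>\<^bsub>SR\<^esub> x" in bexI)
     apply (erule sr_l_neg)
    apply (erule sr_mult_closed[OF sr_mone_closed])
   apply (rule comm_monoidI)
       apply (erule (1) sr_mult_closed)
      apply (rule sr_one_closed)
     apply (erule (2) sr_mult_assoc)
    apply (erule sr_l_one)
   apply (erule (1) sr_mult_comm)
  apply (erule (2) sr_l_distr)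
  done

end

end



context fixes sc :: "'a::comm_ring_1 \<Rightarrow> 'm::ab_group_add \<Rightarrow> 'm" assumes msc: "module sc"
begin

lemmas supp_iff' = supp_iff[OF msc]
lemmas supp_mono' = supp_mono[OF msc]
lemmas supp_colon' = supp_colon[OF msc]

lemma res_apply: "sec_res sc U V \<gamma> q = (if q \<in> Supp sc V then \<gamma> q else {})"
  unfolding sec_res_def by simp

lemma res_mem: assumes V: "zopen sc V" and VU: "V \<subseteq> U" and g: "\<gamma> \<in> sections sc U"
  shows "sec_res sc U V \<gamma> \<in> sections sc V"
proof (rule sectionsI[OF msc])
  fix q assume "q \<in> Supp sc V"
  then show "sec_res sc U V \<gamma> q \<in> loc_carrier q"
    unfolding res_apply using sec_val[OF msc g] supp_mono'[OF VU] by (simp add: subsetD)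
next
  fix Q assume Q: "Q \<in> V"
  then have QU: "Q \<in> U" using VU by blast
  from sec_loc[OF msc g QU] obtain W a s where W: "zopen sc W" "Q \<in> W" "W \<subseteq> U" "\<forall>P\<in>W. s \<notin> colon sc P \<and> \<gamma> (colon sc P) = frac (colon sc P) a s"
    by blast
  have "\<forall>P\<in>W \<inter> V. s \<notin> colon sc P \<and> sec_res sc U V \<gamma> (colon sc P) = frac (colon sc P) a s"
  proof
    fix P assume P: "P \<in> W \<inter> V"
    then have "colon sc P \<in> Supp sc V" using supp_colon' by blast
    then show "s \<notin> colon sc P \<and> sec_res sc U V \<gamma> (colon sc P) = frac (colon sc P) a s"
      using W(4) P by (simp add: res_apply)
  qed
  moreover have "zopen sc (W \<inter> V)" by (rule zopen_Int[OF msc W(1) V])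
  moreover have "Q \<in> W \<inter> V" using W(2) Q by blast
  moreover have "W \<inter> V \<subseteq> V" by blast
  ultimately show "\<exists>W a s. zopen sc W \<and> Q \<in> W \<and> W \<subseteq> V \<and> (\<forall>P\<in>W. s \<notin> colon sc P \<and> sec_res sc U V \<gamma> (colon sc P) = frac (colon sc P) a s)"
    by blast
qed (simp add: res_apply)

lemma res_hom: assumes U: "zopen sc U" and V: "zopen sc V" and VU: "V \<subseteq> U"
  shows "sec_res sc U V \<in> ring_hom (sec_ring sc U) (sec_ring sc V)"
proof (rule ring_hom_memI)
  have SV: "Supp sc V \<subseteq> Supp sc U" by (rule supp_mono'[OF VU])
  fix x y
  show "x \<in> carrier (sec_ring sc U) \<Longrightarrow> sec_res sc U V x \<in> carrier (sec_ring sc V)"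
    unfolding sr_carrier[OF msc U] sr_carrier[OF msc V] by (rule res_mem[OF V VU])
  show "sec_res sc U V (x \<otimes>\<^bsub>sec_ring sc U\<^esub> y) = sec_res sc U V x \<otimes>\<^bsub>sec_ring sc V\<^esub> sec_res sc U V y"
    unfolding sr_mult[OF msc U] sr_mult[OF msc V] using SV by (intro ext) (auto simp: res_apply)
  show "sec_res sc U V (x \<oplus>\<^bsub>sec_ring sc U\<^esub> y) = sec_res sc U V x \<oplus>\<^bsub>sec_ring sc V\<^esub> sec_res sc U V y"
    unfolding sr_add[OF msc U] sr_add[OF msc V] using SV by (intro ext) (auto simp: res_apply)
  show "sec_res sc U V \<one>\<^bsub>sec_ring sc U\<^esub> = \<one>\<^bsub>sec_ring sc V\<^esub>"
    unfolding sr_one[OF msc U] sr_one[OF msc V] using SV by (intro ext) (auto simp: res_apply csec_def[OF msc])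
qed

lemma res_id: "s \<in> sections sc U \<Longrightarrow> sec_res sc U U s = s"
  by (intro ext) (simp add: res_apply sec_out[OF msc])

lemma res_comp: "W \<subseteq> V \<Longrightarrow> sec_res sc V W (sec_res sc U V s) = sec_res sc U W s"
  using supp_mono' by (intro ext) (auto simp: res_apply)

lemma sheaf_loc: "zopen sc U \<and> (\<forall>V\<in>\<U>. zopen sc V) \<and> \<Union>\<U> = U \<Longrightarrow> s \<in> carrier (sec_ring sc U) \<Longrightarrow> t \<in> carrier (sec_ring sc U) \<Longrightarrow>
   \<forall>V\<in>\<U>. sec_res sc U V s = sec_res sc U V t \<Longrightarrow> s = t"
proof -
  assume h: "zopen sc U \<and> (\<forall>V\<in>\<U>. zopen sc V) \<and> \<Union>\<U> = U"
    and s: "s \<in> carrier (sec_ring sc U)" and t: "t \<in> carrier (sec_ring sc U)"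
    and e: "\<forall>V\<in>\<U>. sec_res sc U V s = sec_res sc U V t"
  have s': "s \<in> sections sc U" and t': "t \<in> sections sc U" using s t sr_carrier[OF msc, of U] h by auto
  show "s = t"
  proof (rule ext)
    fix q show "s q = t q"
    proof (cases "q \<in> Supp sc U")
      case True
      then obtain P where P: "P \<in> U" "q = colon sc P" unfolding supp_iff' by blast
      then obtain V where V: "V \<in> \<U>" "P \<in> V" using h by blast
      have "sec_res sc U V s q = sec_res sc U V t q" using e V by simp
      then show ?thesis using supp_colon'[OF V(2)] P by (simp add: res_apply)
    next
      case False then show ?thesis using sec_out[OF msc s'] sec_out[OF msc t'] by simp
    qed
  qed
qed

lemma sheaf_glue: "zopen sc U \<and> (\<forall>V\<in>\<U>. zopen sc V) \<and> \<Union>\<U> = U \<and> (\<forall>V\<in>\<U>. f V \<in> carrier (sec_ring sc V)) \<and>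
     (\<forall>V\<in>\<U>. \<forall>V'\<in>\<U>. sec_res sc V (V \<inter> V') (f V) = sec_res sc V' (V \<inter> V') (f V')) \<Longrightarrow>
    \<exists>s\<in>carrier (sec_ring sc U). \<forall>V\<in>\<U>. sec_res sc U V s = f V"
proof -
  assume h: "zopen sc U \<and> (\<forall>V\<in>\<U>. zopen sc V) \<and> \<Union>\<U> = U \<and> (\<forall>V\<in>\<U>. f V \<in> carrier (sec_ring sc V)) \<and>
     (\<forall>V\<in>\<U>. \<forall>V'\<in>\<U>. sec_res sc V (V \<inter> V') (f V) = sec_res sc V' (V \<inter> V') (f V'))"
  then have U: "zopen sc U" and op: "\<And>V. V \<in> \<U> \<Longrightarrow> zopen sc V" and un: "\<Union>\<U> = U"
    and fV': "\<And>V. V \<in> \<U> \<Longrightarrow> f V \<in> carrier (sec_ring sc V)"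
    and comp: "\<And>V V'. V \<in> \<U> \<Longrightarrow> V' \<in> \<U> \<Longrightarrow> sec_res sc V (V \<inter> V') (f V) = sec_res sc V' (V \<inter> V') (f V')"
    by blast+
  have fV: "f V \<in> sections sc V" if "V \<in> \<U>" for V using fV'[OF that] sr_carrier[OF msc op[OF that]] by simp
  define s where "s = (\<lambda>q. if q \<in> Supp sc U then f (SOME V. V \<in> \<U> \<and> q \<in> Supp sc V) q else {})"
  have key: "s q = f V q" if V: "V \<in> \<U>" and q: "q \<in> Supp sc V" for V q
  proof -
    have VU: "V \<subseteq> U" using V un by blast
    have qU: "q \<in> Supp sc U" by (rule subsetD[OF supp_mono'[OF VU] q])
    define V' where "V' = (SOME V. V \<in> \<U> \<and> q \<in> Supp sc V)"
    have "V' \<in> \<U> \<and> q \<in> Supp sc V'" unfolding V'_def by (rule someI[where x=V]) (simp add: V q)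
    then have V': "V' \<in> \<U>" "q \<in> Supp sc V'" by simp_all
    obtain P1 where P1: "P1 \<in> V" "q = colon sc P1" using q unfolding supp_iff' by blast
    obtain P2 where P2: "P2 \<in> V'" "q = colon sc P2" using V'(2) unfolding supp_iff' by blast
    have P1S: "P1 \<in> Spec sc" using zopen_sub[OF msc op[OF V]] P1(1) by blast
    have "colon sc P1 = colon sc P2" using P1 P2 by simp
    then have "P1 \<in> V'" by (rule zopen_sat[OF msc op[OF V'(1)] P2(1) P1S])
    then have "P1 \<in> V \<inter> V'" using P1(1) by blast
    then have "colon sc P1 \<in> Supp sc (V \<inter> V')" by (rule supp_colon')
    then have qVV: "q \<in> Supp sc (V \<inter> V')" using P1(2) by simp
    have "sec_res sc V (V \<inter> V') (f V) q = sec_res sc V' (V \<inter> V') (f V') q" using comp[OF V V'(1)] by simp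
    then have "f V q = f V' q" using qVV by (simp add: res_apply)
    then show ?thesis unfolding s_def V'_def[symmetric] using qU by simp
  qed
  have smem: "s \<in> sections sc U"
  proof (rule sectionsI[OF msc])
    fix q assume "q \<in> Supp sc U"
    then obtain P V where PV: "V \<in> \<U>" "P \<in> V" "q = colon sc P" unfolding supp_iff' using un by blast
    then have qV: "q \<in> Supp sc V" using supp_colon' by blast
    have "s q = f V q" by (rule key[OF PV(1) qV])
    then show "s q \<in> loc_carrier q" using sec_val[OF msc fV[OF PV(1)] qV] by simp
  next
    fix Q assume "Q \<in> U"
    then obtain V where V: "V \<in> \<U>" "Q \<in> V" using un by blast
    then obtain W a t where W: "zopen sc W" "Q \<in> W" "W \<subseteq> V" "\<forall>P\<in>W. t \<notin> colon sc P \<and> f V (colon sc P) = frac (colon sc P) a t"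
      using sec_loc[OF msc fV[OF V(1)] V(2)] by blast
    have "\<forall>P\<in>W. t \<notin> colon sc P \<and> s (colon sc P) = frac (colon sc P) a t"
    proof
      fix P assume P: "P \<in> W"
      then have "colon sc P \<in> Supp sc V" using W(3) supp_colon' by blast
      then have "s (colon sc P) = f V (colon sc P)" by (rule key[OF V(1)])
      then show "t \<notin> colon sc P \<and> s (colon sc P) = frac (colon sc P) a t" using W(4) P by simp
    qed
    then show "\<exists>W a t. zopen sc W \<and> Q \<in> W \<and> W \<subseteq> U \<and> (\<forall>P\<in>W. t \<notin> colon sc P \<and> s (colon sc P) = frac (colon sc P) a t)"
      using W(1,2,3) V(1) un by (intro exI[of _ W] exI[of _ a] exI[of _ t]) blast
  qed (simp add: s_def)
  show "\<exists>s\<in>carrier (sec_ring sc U). \<forall>V\<in>\<U>. sec_res sc U V s = f V"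
  proof (intro bexI ballI)
    show "s \<in> carrier (sec_ring sc U)" using smem sr_carrier[OF msc U] by simp
    fix V assume V: "V \<in> \<U>"
    show "sec_res sc U V s = f V"
      by (intro ext) (simp add: res_apply key[OF V] sec_out[OF msc fV[OF V]])
  qed
qed

lemma sheaf: "sheaf_of_rings (Spec sc) (zopen sc) (sec_ring sc) (sec_res sc)"
  unfolding sheaf_of_rings_def
proof (intro conjI allI impI ballI)
  fix U assume "zopen sc U" then show "cring (sec_ring sc U)" by (rule sr_cring[OF msc])
next
  fix U V assume "zopen sc U \<and> zopen sc V \<and> V \<subseteq> U"
  then show "sec_res sc U V \<in> ring_hom (sec_ring sc U) (sec_ring sc V)" by (elim conjE) (rule res_hom)
next
  fix U s assume "zopen sc U" "s \<in> carrier (sec_ring sc U)"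
  then show "sec_res sc U U s = s" using res_id[of s U] sr_carrier[OF msc, of U] by simp
next
  fix U V W s assume "zopen sc U \<and> zopen sc V \<and> zopen sc W \<and> W \<subseteq> V \<and> V \<subseteq> U"
  then show "sec_res sc V W (sec_res sc U V s) = sec_res sc U W s" by (elim conjE) (rule res_comp)
next
  fix U \<U> s t assume "zopen sc U \<and> (\<forall>V\<in>\<U>. zopen sc V) \<and> \<Union>\<U> = U"
    "s \<in> carrier (sec_ring sc U)" "t \<in> carrier (sec_ring sc U)" "\<forall>V\<in>\<U>. sec_res sc U V s = sec_res sc U V t"
  then show "s = t" by (rule sheaf_loc)
next
  fix U \<U> f assume "zopen sc U \<and> (\<forall>V\<in>\<U>. zopen sc V) \<and> \<Union>\<U> = U \<and> (\<forall>V\<in>\<U>. f V \<in> carrier (sec_ring sc V)) \<and>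
     (\<forall>V\<in>\<U>. \<forall>V'\<in>\<U>. sec_res sc V (V \<inter> V') (f V) = sec_res sc V' (V \<inter> V') (f V'))"
  then show "\<exists>s\<in>carrier (sec_ring sc U). \<forall>V\<in>\<U>. sec_res sc U V s = f V" by (rule sheaf_glue)
qed

end



lemma supp_iff_g: "q \<in> Supp sc U \<longleftrightarrow> (\<exists>P\<in>U. q = colon sc P)"
  unfolding Supp_def by blast
lemma supp_colon_g: "P \<in> U \<Longrightarrow> colon sc P \<in> Supp sc U"
  unfolding Supp_def by blast
lemma supp_mono_g: "V \<subseteq> U \<Longrightarrow> Supp sc V \<subseteq> Supp sc U"
  unfolding Supp_def by blast
lemma res_apply_g: "sec_res sc U V \<gamma> q = (if q \<in> Supp sc V then \<gamma> q else {})"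
  unfolding sec_res_def by simp

context fixes sc :: "'a::comm_ring_1 \<Rightarrow> 'm::ab_group_add \<Rightarrow> 'm" and P assumes msc: "module sc" and PS: "P \<in> Spec sc"
begin

abbreviation "pp \<equiv> colon sc P"
abbreviation "ST \<equiv> AX_stalk sc P"

lemma ppr: "prim pp" by (rule colon_prim[OF msc PS])

definition valid :: "'m set set \<Rightarrow> ('a set \<Rightarrow> ('a \<times> 'a) set) \<Rightarrow> bool" where
  "valid U \<gamma> \<longleftrightarrow> zopen sc U \<and> P \<in> U \<and> \<gamma> \<in> sections sc U"

definition agree :: "'m set set \<Rightarrow> ('a set \<Rightarrow> ('a \<times> 'a) set) \<Rightarrow> 'm set set \<Rightarrow> ('a set \<Rightarrow> ('a \<times> 'a) set) \<Rightarrow> bool" where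
  "agree U \<gamma> V \<delta> \<longleftrightarrow> (\<exists>W. zopen sc W \<and> P \<in> W \<and> W \<subseteq> U \<inter> V \<and> (\<forall>q\<in>Supp sc W. \<gamma> q = \<delta> q))"

lemma res_eq_iff: "sec_res sc U W \<gamma> = sec_res sc V W \<delta> \<longleftrightarrow> (\<forall>q\<in>Supp sc W. \<gamma> q = \<delta> q)"
proof
  assume e: "sec_res sc U W \<gamma> = sec_res sc V W \<delta>"
  show "\<forall>q\<in>Supp sc W. \<gamma> q = \<delta> q"
  proof
    fix q assume "q \<in> Supp sc W"
    moreover have "sec_res sc U W \<gamma> q = sec_res sc V W \<delta> q" using e by simp
    ultimately show "\<gamma> q = \<delta> q" by (simp add: res_apply_g)
  qed
qed (intro ext, simp add: res_apply_g)

lemma grel_iff: "((U, \<gamma>), (V, \<delta>)) \<in> germ_rel (zopen sc) (sec_ring sc) (sec_res sc) P \<longleftrightarrow>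
    valid U \<gamma> \<and> valid V \<delta> \<and> agree U \<gamma> V \<delta>"
proof -
  have c: "carrier (sec_ring sc X) = sections sc X" for X by (simp add: sec_ring_def)
  show ?thesis unfolding germ_rel_def valid_def agree_def c res_eq_iff by blast
qed

lemma agree_refl: "valid U \<gamma> \<Longrightarrow> agree U \<gamma> U \<gamma>"
  unfolding valid_def agree_def by blast

lemma agree_sym: "agree U \<gamma> V \<delta> \<Longrightarrow> agree V \<delta> U \<gamma>"
  unfolding agree_def by (metis inf_commute)

lemma agree_trans: assumes "agree U \<gamma> V \<delta>" "agree V \<delta> X \<epsilon>" shows "agree U \<gamma> X \<epsilon>"
proof -
  obtain W1 where W1: "zopen sc W1" "P \<in> W1" "W1 \<subseteq> U \<inter> V" "\<forall>q\<in>Supp sc W1. \<gamma> q = \<delta> q"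
    using assms(1) unfolding agree_def by blast
  obtain W2 where W2: "zopen sc W2" "P \<in> W2" "W2 \<subseteq> V \<inter> X" "\<forall>q\<in>Supp sc W2. \<delta> q = \<epsilon> q"
    using assms(2) unfolding agree_def by blast
  have o: "zopen sc (W1 \<inter> W2)" by (rule zopen_Int[OF msc W1(1) W2(1)])
  have "\<forall>q\<in>Supp sc (W1 \<inter> W2). \<gamma> q = \<epsilon> q"
  proof
    fix q assume "q \<in> Supp sc (W1 \<inter> W2)"
    then have "q \<in> Supp sc W1" "q \<in> Supp sc W2" using supp_mono_g[of "W1 \<inter> W2" W1] supp_mono_g[of "W1 \<inter> W2" W2] by auto
    then show "\<gamma> q = \<epsilon> q" using W1(4) W2(4) by simp
  qed
  moreover have "W1 \<inter> W2 \<subseteq> U \<inter> X" using W1(3) W2(3) by blast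
  ultimately show ?thesis unfolding agree_def using o W1(2) W2(2) by blast
qed

abbreviation "gm \<equiv> germ (zopen sc) (sec_ring sc) (sec_res sc) P"

lemma mem_germ: "(V, \<delta>) \<in> gm U \<gamma> \<longleftrightarrow> valid U \<gamma> \<and> valid V \<delta> \<and> agree U \<gamma> V \<delta>"
  unfolding germ_def using grel_iff by blast

lemma germ_self: "valid U \<gamma> \<Longrightarrow> (U, \<gamma>) \<in> gm U \<gamma>"
  using mem_germ agree_refl by blast

lemma germ_eq: assumes "valid U \<gamma>" "valid V \<delta>" shows "gm U \<gamma> = gm V \<delta> \<longleftrightarrow> agree U \<gamma> V \<delta>"
proof
  assume "gm U \<gamma> = gm V \<delta>"
  then have "(V, \<delta>) \<in> gm U \<gamma>" using germ_self[OF assms(2)] by simp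
  then show "agree U \<gamma> V \<delta>" using mem_germ by blast
next
  assume a: "agree U \<gamma> V \<delta>"
  show "gm U \<gamma> = gm V \<delta>"
  proof (intro equalityI subsetI)
    fix x assume "x \<in> gm U \<gamma>"
    then obtain X \<epsilon> where x: "x = (X, \<epsilon>)" "valid X \<epsilon>" "agree U \<gamma> X \<epsilon>" by (cases x) (auto simp: mem_germ)
    then have "agree V \<delta> X \<epsilon>" using agree_trans[OF agree_sym[OF a]] by blast
    then show "x \<in> gm V \<delta>" using x assms by (simp add: mem_germ)
  next
    fix x assume "x \<in> gm V \<delta>"
    then obtain X \<epsilon> where x: "x = (X, \<epsilon>)" "valid X \<epsilon>" "agree V \<delta> X \<epsilon>" by (cases x) (auto simp: mem_germ)
    then have "agree U \<gamma> X \<epsilon>" using agree_trans[OF a] by blast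
    then show "x \<in> gm U \<gamma>" using x assms by (simp add: mem_germ)
  qed
qed

lemma agree_val: "agree U \<gamma> V \<delta> \<Longrightarrow> \<gamma> pp = \<delta> pp"
  unfolding agree_def using supp_colon_g by blast

definition phi :: "('m set set \<times> ('a set \<Rightarrow> ('a \<times> 'a) set)) set \<Rightarrow> ('a \<times> 'a) set" where
  "phi x = \<Union>{\<gamma> pp | U \<gamma>. (U, \<gamma>) \<in> x}"

lemma phi_germ: assumes "valid U \<gamma>" shows "phi (gm U \<gamma>) = \<gamma> pp"
  unfolding phi_def
proof (rule Union_const)
  show "{\<delta> pp | V \<delta>. (V, \<delta>) \<in> gm U \<gamma>} \<noteq> {}" using germ_self[OF assms] by blast
  fix y assume "y \<in> {\<delta> pp | V \<delta>. (V, \<delta>) \<in> gm U \<gamma>}"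
  then obtain V \<delta> where "y = \<delta> pp" "(V, \<delta>) \<in> gm U \<gamma>" by blast
  then show "y = \<gamma> pp" using agree_val mem_germ by metis
qed

lemma st_carrier: "carrier ST = {gm U \<gamma> | U \<gamma>. valid U \<gamma>}"
proof -
  have c: "carrier (sec_ring sc X) = sections sc X" for X by (simp add: sec_ring_def)
  show ?thesis unfolding AX_stalk_def stalk_def valid_def c by simp
qed


definition gsum :: "'m set set \<Rightarrow> ('a set \<Rightarrow> ('a \<times> 'a) set) \<Rightarrow> 'm set set \<Rightarrow> ('a set \<Rightarrow> ('a \<times> 'a) set) \<Rightarrow> ('a set \<Rightarrow> ('a \<times> 'a) set)" where
  "gsum U \<gamma> V \<delta> = sec_res sc U (U \<inter> V) \<gamma> \<oplus>\<^bsub>sec_ring sc (U \<inter> V)\<^esub> sec_res sc V (U \<inter> V) \<delta>"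

lemma gsum_eq: "gsum U \<gamma> V \<delta> = (\<lambda>q. if q \<in> Supp sc (U \<inter> V) then loc_add q (sec_res sc U (U \<inter> V) \<gamma> q) (sec_res sc V (U \<inter> V) \<delta> q) else {})"
  unfolding gsum_def by (simp add: sec_ring_def)

lemma gsum_apply: "q \<in> Supp sc (U \<inter> V) \<Longrightarrow> gsum U \<gamma> V \<delta> q = loc_add q (\<gamma> q) (\<delta> q)"
  unfolding gsum_eq by (simp add: res_apply_g)

lemma gsum_valid: assumes "valid U \<gamma>" "valid V \<delta>" shows "valid (U \<inter> V) (gsum U \<gamma> V \<delta>)"
proof -
  have U: "zopen sc U" "P \<in> U" "\<gamma> \<in> sections sc U" and V: "zopen sc V" "P \<in> V" "\<delta> \<in> sections sc V"
    using assms unfolding valid_def by auto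
  have o: "zopen sc (U \<inter> V)" by (rule zopen_Int[OF msc U(1) V(1)])
  have r1: "sec_res sc U (U \<inter> V) \<gamma> \<in> sections sc (U \<inter> V)" by (rule res_mem[OF msc o _ U(3)]) blast
  have r2: "sec_res sc V (U \<inter> V) \<delta> \<in> sections sc (U \<inter> V)" by (rule res_mem[OF msc o _ V(3)]) blast
  have "gsum U \<gamma> V \<delta> \<in> sections sc (U \<inter> V)" unfolding gsum_eq by (rule sec_add_mem[OF msc o r1 r2])
  then show ?thesis unfolding valid_def using o U(2) V(2) by blast
qed

lemma gsum_agree: assumes a1: "agree U \<gamma> U' \<gamma>'" and a2: "agree V \<delta> V' \<delta>'"
  shows "agree (U \<inter> V) (gsum U \<gamma> V \<delta>) (U' \<inter> V') (gsum U' \<gamma>' V' \<delta>')"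
proof -
  obtain W1 where W1: "zopen sc W1" "P \<in> W1" "W1 \<subseteq> U \<inter> U'" "\<forall>q\<in>Supp sc W1. \<gamma> q = \<gamma>' q"
    using a1 unfolding agree_def by blast
  obtain W2 where W2: "zopen sc W2" "P \<in> W2" "W2 \<subseteq> V \<inter> V'" "\<forall>q\<in>Supp sc W2. \<delta> q = \<delta>' q"
    using a2 unfolding agree_def by blast
  have o: "zopen sc (W1 \<inter> W2)" by (rule zopen_Int[OF msc W1(1) W2(1)])
  have sub: "W1 \<inter> W2 \<subseteq> (U \<inter> V) \<inter> (U' \<inter> V')" using W1(3) W2(3) by blast
  have "\<forall>q\<in>Supp sc (W1 \<inter> W2). gsum U \<gamma> V \<delta> q = gsum U' \<gamma>' V' \<delta>' q"
  proof
    fix q assume q: "q \<in> Supp sc (W1 \<inter> W2)"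
    have "Supp sc (W1 \<inter> W2) \<subseteq> Supp sc W1" "Supp sc (W1 \<inter> W2) \<subseteq> Supp sc W2"
      "Supp sc (W1 \<inter> W2) \<subseteq> Supp sc (U \<inter> V)" "Supp sc (W1 \<inter> W2) \<subseteq> Supp sc (U' \<inter> V')"
      using supp_mono_g sub by (metis inf_le1 inf_le2 le_infE)+
    then have "q \<in> Supp sc W1" "q \<in> Supp sc W2" "q \<in> Supp sc (U \<inter> V)" "q \<in> Supp sc (U' \<inter> V')" using q by blast+
    then show "gsum U \<gamma> V \<delta> q = gsum U' \<gamma>' V' \<delta>' q" using W1(4) W2(4) by (simp add: gsum_apply)
  qed
  then show ?thesis unfolding agree_def using o W1(2) W2(2) sub by blast
qed

lemma st_add: assumes "valid U \<gamma>" "valid V \<delta>"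
  shows "gm U \<gamma> \<oplus>\<^bsub>ST\<^esub> gm V \<delta> = gm (U \<inter> V) (gsum U \<gamma> V \<delta>)"
proof -
  have e: "gm U \<gamma> \<oplus>\<^bsub>ST\<^esub> gm V \<delta> = \<Union>{gm (U' \<inter> V') (gsum U' \<gamma>' V' \<delta>') | U' \<gamma>' V' \<delta>'. (U', \<gamma>') \<in> gm U \<gamma> \<and> (V', \<delta>') \<in> gm V \<delta>}"
    unfolding AX_stalk_def stalk_def gsum_def by simp
  show ?thesis unfolding e
  proof (rule Union_const)
    show "{gm (U' \<inter> V') (gsum U' \<gamma>' V' \<delta>') | U' \<gamma>' V' \<delta>'. (U', \<gamma>') \<in> gm U \<gamma> \<and> (V', \<delta>') \<in> gm V \<delta>} \<noteq> {}"
      using germ_self[OF assms(1)] germ_self[OF assms(2)] by blast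
    fix y assume "y \<in> {gm (U' \<inter> V') (gsum U' \<gamma>' V' \<delta>') | U' \<gamma>' V' \<delta>'. (U', \<gamma>') \<in> gm U \<gamma> \<and> (V', \<delta>') \<in> gm V \<delta>}"
    then obtain U' \<gamma>' V' \<delta>' where y: "y = gm (U' \<inter> V') (gsum U' \<gamma>' V' \<delta>')" and m1: "(U', \<gamma>') \<in> gm U \<gamma>" and m2: "(V', \<delta>') \<in> gm V \<delta>"
      by blast
    have v1: "valid U' \<gamma>'" and ag1: "agree U \<gamma> U' \<gamma>'" using m1 mem_germ by blast+
    have v2: "valid V' \<delta>'" and ag2: "agree V \<delta> V' \<delta>'" using m2 mem_germ by blast+
    have "agree (U' \<inter> V') (gsum U' \<gamma>' V' \<delta>') (U \<inter> V) (gsum U \<gamma> V \<delta>)"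
      by (rule gsum_agree[OF agree_sym[OF ag1] agree_sym[OF ag2]])
    then show "y = gm (U \<inter> V) (gsum U \<gamma> V \<delta>)" unfolding y
      using germ_eq[OF gsum_valid[OF v1 v2] gsum_valid[OF assms]] by blast
  qed
qed

definition gprod :: "'m set set \<Rightarrow> ('a set \<Rightarrow> ('a \<times> 'a) set) \<Rightarrow> 'm set set \<Rightarrow> ('a set \<Rightarrow> ('a \<times> 'a) set) \<Rightarrow> ('a set \<Rightarrow> ('a \<times> 'a) set)" where
  "gprod U \<gamma> V \<delta> = sec_res sc U (U \<inter> V) \<gamma> \<otimes>\<^bsub>sec_ring sc (U \<inter> V)\<^esub> sec_res sc V (U \<inter> V) \<delta>"

lemma gprod_eq: "gprod U \<gamma> V \<delta> = (\<lambda>q. if q \<in> Supp sc (U \<inter> V) then loc_mult q (sec_res sc U (U \<inter> V) \<gamma> q) (sec_res sc V (U \<inter> V) \<delta> q) else {})"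
  unfolding gprod_def by (simp add: sec_ring_def)

lemma gprod_apply: "q \<in> Supp sc (U \<inter> V) \<Longrightarrow> gprod U \<gamma> V \<delta> q = loc_mult q (\<gamma> q) (\<delta> q)"
  unfolding gprod_eq by (simp add: res_apply_g)

lemma gprod_valid: assumes "valid U \<gamma>" "valid V \<delta>" shows "valid (U \<inter> V) (gprod U \<gamma> V \<delta>)"
proof -
  have U: "zopen sc U" "P \<in> U" "\<gamma> \<in> sections sc U" and V: "zopen sc V" "P \<in> V" "\<delta> \<in> sections sc V"
    using assms unfolding valid_def by auto
  have o: "zopen sc (U \<inter> V)" by (rule zopen_Int[OF msc U(1) V(1)])
  have r1: "sec_res sc U (U \<inter> V) \<gamma> \<in> sections sc (U \<inter> V)" by (rule res_mem[OF msc o _ U(3)]) blast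
  have r2: "sec_res sc V (U \<inter> V) \<delta> \<in> sections sc (U \<inter> V)" by (rule res_mem[OF msc o _ V(3)]) blast
  have "gprod U \<gamma> V \<delta> \<in> sections sc (U \<inter> V)" unfolding gprod_eq by (rule sec_mult_mem[OF msc o r1 r2])
  then show ?thesis unfolding valid_def using o U(2) V(2) by blast
qed

lemma gprod_agree: assumes a1: "agree U \<gamma> U' \<gamma>'" and a2: "agree V \<delta> V' \<delta>'"
  shows "agree (U \<inter> V) (gprod U \<gamma> V \<delta>) (U' \<inter> V') (gprod U' \<gamma>' V' \<delta>')"
proof -
  obtain W1 where W1: "zopen sc W1" "P \<in> W1" "W1 \<subseteq> U \<inter> U'" "\<forall>q\<in>Supp sc W1. \<gamma> q = \<gamma>' q"
    using a1 unfolding agree_def by blast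
  obtain W2 where W2: "zopen sc W2" "P \<in> W2" "W2 \<subseteq> V \<inter> V'" "\<forall>q\<in>Supp sc W2. \<delta> q = \<delta>' q"
    using a2 unfolding agree_def by blast
  have o: "zopen sc (W1 \<inter> W2)" by (rule zopen_Int[OF msc W1(1) W2(1)])
  have sub: "W1 \<inter> W2 \<subseteq> (U \<inter> V) \<inter> (U' \<inter> V')" using W1(3) W2(3) by blast
  have "\<forall>q\<in>Supp sc (W1 \<inter> W2). gprod U \<gamma> V \<delta> q = gprod U' \<gamma>' V' \<delta>' q"
  proof
    fix q assume q: "q \<in> Supp sc (W1 \<inter> W2)"
    have "Supp sc (W1 \<inter> W2) \<subseteq> Supp sc W1" "Supp sc (W1 \<inter> W2) \<subseteq> Supp sc W2"
      "Supp sc (W1 \<inter> W2) \<subseteq> Supp sc (U \<inter> V)" "Supp sc (W1 \<inter> W2) \<subseteq> Supp sc (U' \<inter> V')"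
      using supp_mono_g sub by (metis inf_le1 inf_le2 le_infE)+
    then have "q \<in> Supp sc W1" "q \<in> Supp sc W2" "q \<in> Supp sc (U \<inter> V)" "q \<in> Supp sc (U' \<inter> V')" using q by blast+
    then show "gprod U \<gamma> V \<delta> q = gprod U' \<gamma>' V' \<delta>' q" using W1(4) W2(4) by (simp add: gprod_apply)
  qed
  then show ?thesis unfolding agree_def using o W1(2) W2(2) sub by blast
qed

lemma st_mult: assumes "valid U \<gamma>" "valid V \<delta>"
  shows "gm U \<gamma> \<otimes>\<^bsub>ST\<^esub> gm V \<delta> = gm (U \<inter> V) (gprod U \<gamma> V \<delta>)"
proof -
  have e: "gm U \<gamma> \<otimes>\<^bsub>ST\<^esub> gm V \<delta> = \<Union>{gm (U' \<inter> V') (gprod U' \<gamma>' V' \<delta>') | U' \<gamma>' V' \<delta>'. (U', \<gamma>') \<in> gm U \<gamma> \<and> (V', \<delta>') \<in> gm V \<delta>}"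
    unfolding AX_stalk_def stalk_def gprod_def by simp
  show ?thesis unfolding e
  proof (rule Union_const)
    show "{gm (U' \<inter> V') (gprod U' \<gamma>' V' \<delta>') | U' \<gamma>' V' \<delta>'. (U', \<gamma>') \<in> gm U \<gamma> \<and> (V', \<delta>') \<in> gm V \<delta>} \<noteq> {}"
      using germ_self[OF assms(1)] germ_self[OF assms(2)] by blast
    fix y assume "y \<in> {gm (U' \<inter> V') (gprod U' \<gamma>' V' \<delta>') | U' \<gamma>' V' \<delta>'. (U', \<gamma>') \<in> gm U \<gamma> \<and> (V', \<delta>') \<in> gm V \<delta>}"
    then obtain U' \<gamma>' V' \<delta>' where y: "y = gm (U' \<inter> V') (gprod U' \<gamma>' V' \<delta>')" and m1: "(U', \<gamma>') \<in> gm U \<gamma>" and m2: "(V', \<delta>') \<in> gm V \<delta>"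
      by blast
    have v1: "valid U' \<gamma>'" and ag1: "agree U \<gamma> U' \<gamma>'" using m1 mem_germ by blast+
    have v2: "valid V' \<delta>'" and ag2: "agree V \<delta> V' \<delta>'" using m2 mem_germ by blast+
    have "agree (U' \<inter> V') (gprod U' \<gamma>' V' \<delta>') (U \<inter> V) (gprod U \<gamma> V \<delta>)"
      by (rule gprod_agree[OF agree_sym[OF ag1] agree_sym[OF ag2]])
    then show "y = gm (U \<inter> V) (gprod U \<gamma> V \<delta>)" unfolding y
      using germ_eq[OF gprod_valid[OF v1 v2] gprod_valid[OF assms]] by blast
  qed
qed


lemma sr_carrier_g: "carrier (sec_ring sc X) = sections sc X" by (simp add: sec_ring_def)

abbreviation "SS \<equiv> sec_ring sc (Spec sc)"

lemma valid_one: "valid (Spec sc) \<one>\<^bsub>SS\<^esub>"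
  unfolding valid_def using zopen_Spec[OF msc] PS sr_one_closed[OF msc zopen_Spec[OF msc]] sr_carrier_g by simp

lemma valid_zero: "valid (Spec sc) \<zero>\<^bsub>SS\<^esub>"
  unfolding valid_def using zopen_Spec[OF msc] PS sr_zero_closed[OF msc zopen_Spec[OF msc]] sr_carrier_g by simp

lemma st_one: "\<one>\<^bsub>ST\<^esub> = gm (Spec sc) \<one>\<^bsub>SS\<^esub>" by (simp add: AX_stalk_def stalk_def)
lemma st_zero: "\<zero>\<^bsub>ST\<^esub> = gm (Spec sc) \<zero>\<^bsub>SS\<^esub>" by (simp add: AX_stalk_def stalk_def)

lemma ppS: "pp \<in> Supp sc (Spec sc)" by (rule supp_colon_g[OF PS])

lemma phi_one: "phi \<one>\<^bsub>ST\<^esub> = frac pp 1 1"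
  unfolding st_one phi_germ[OF valid_one] using ppS by (simp add: sec_ring_def)

lemma phi_zero: "phi \<zero>\<^bsub>ST\<^esub> = frac pp 0 1"
  unfolding st_zero phi_germ[OF valid_zero] using ppS by (simp add: sec_ring_def)

lemma carrier_E: assumes "x \<in> carrier ST" obtains U \<gamma> where "valid U \<gamma>" "x = gm U \<gamma>"
  using assms unfolding st_carrier by blast

lemma phi_in: assumes "valid U \<gamma>" shows "phi (gm U \<gamma>) \<in> loc_carrier pp"
proof -
  have "\<gamma> \<in> sections sc U" "pp \<in> Supp sc U" using assms supp_colon_g unfolding valid_def by auto
  then show ?thesis unfolding phi_germ[OF assms] by (rule sec_val[OF msc])
qed

lemma val_agree: assumes v1: "valid U \<gamma>" and v2: "valid V \<delta>" and e: "\<gamma> pp = \<delta> pp"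
  shows "agree U \<gamma> V \<delta>"
proof -
  have U: "zopen sc U" "P \<in> U" "\<gamma> \<in> sections sc U" and V: "zopen sc V" "P \<in> V" "\<delta> \<in> sections sc V"
    using v1 v2 unfolding valid_def by auto
  from sec_loc[OF msc U(3) U(2)] obtain W1 a s where W1: "zopen sc W1" "P \<in> W1" "W1 \<subseteq> U"
     "\<forall>P\<in>W1. s \<notin> colon sc P \<and> \<gamma> (colon sc P) = frac (colon sc P) a s" by blast
  from sec_loc[OF msc V(3) V(2)] obtain W2 b t where W2: "zopen sc W2" "P \<in> W2" "W2 \<subseteq> V"
     "\<forall>P\<in>W2. t \<notin> colon sc P \<and> \<delta> (colon sc P) = frac (colon sc P) b t" by blast
  have st: "s \<notin> pp" "t \<notin> pp" "\<gamma> pp = frac pp a s" "\<delta> pp = frac pp b t" using W1(2,4) W2(2,4) by auto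
  then have "frac pp a s = frac pp b t" using e by simp
  then obtain u where u: "u \<notin> pp" "u * (a * t - b * s) = 0" using frac_eq[OF ppr st(1,2)] by blast
  define W where "W = W1 \<inter> W2 \<inter> Dset sc u"
  have oW: "zopen sc W" unfolding W_def by (intro zopen_Int[OF msc] W1(1) W2(1) zopen_D[OF msc])
  have PW: "P \<in> W" unfolding W_def Dset_def[OF msc] using W1(2) W2(2) PS u(1) by blast
  have sub: "W \<subseteq> U \<inter> V" unfolding W_def using W1(3) W2(3) by blast
  have "\<forall>q\<in>Supp sc W. \<gamma> q = \<delta> q"
  proof
    fix q assume "q \<in> Supp sc W"
    then obtain P' where P': "P' \<in> W" "q = colon sc P'" unfolding supp_iff_g by blast
    have P'S: "P' \<in> Spec sc" using P'(1) unfolding W_def Dset_def[OF msc] by blast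
    have pq: "prim q" unfolding P'(2) by (rule colon_prim[OF msc P'S])
    have "u \<notin> q" using P' unfolding W_def Dset_def[OF msc] by blast
    moreover have "s \<notin> q" "\<gamma> q = frac q a s" using W1(4) P' unfolding W_def by auto
    moreover have "t \<notin> q" "\<delta> q = frac q b t" using W2(4) P' unfolding W_def by auto
    ultimately show "\<gamma> q = \<delta> q" using frac_eq[OF pq, of s t a b] u(2) by auto
  qed
  then show ?thesis unfolding agree_def using oW PW sub by blast
qed

lemma phi_bij: "bij_betw phi (carrier ST) (loc_carrier pp)"
proof (rule bij_betw_imageI)
  show "inj_on phi (carrier ST)"
  proof (rule inj_onI)
    fix x y assume x: "x \<in> carrier ST" and y: "y \<in> carrier ST" and e: "phi x = phi y"
    obtain U \<gamma> where g: "valid U \<gamma>" "x = gm U \<gamma>" using x by (rule carrier_E)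
    obtain V \<delta> where d: "valid V \<delta>" "y = gm V \<delta>" using y by (rule carrier_E)
    have "\<gamma> pp = \<delta> pp" using e unfolding g(2) d(2) phi_germ[OF g(1)] phi_germ[OF d(1)] .
    then have "agree U \<gamma> V \<delta>" by (rule val_agree[OF g(1) d(1)])
    then show "x = y" unfolding g(2) d(2) using germ_eq[OF g(1) d(1)] by blast
  qed
  show "phi ` carrier ST = loc_carrier pp"
  proof (intro equalityI subsetI)
    fix z assume "z \<in> phi ` carrier ST"
    then obtain x where x: "x \<in> carrier ST" "z = phi x" by blast
    obtain U \<gamma> where g: "valid U \<gamma>" "x = gm U \<gamma>" using x(1) by (rule carrier_E)
    show "z \<in> loc_carrier pp" unfolding x(2) g(2) by (rule phi_in[OF g(1)])
  next
    fix z assume "z \<in> loc_carrier pp"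
    then obtain a s where z: "s \<notin> pp" "z = frac pp a s" by (rule loc_carrierE)
    define U where "U = Dset sc s"
    have oU: "zopen sc U" unfolding U_def by (rule zopen_D[OF msc])
    have sU: "\<forall>P\<in>U. s \<notin> colon sc P" unfolding U_def Dset_def[OF msc] by blast
    have PU: "P \<in> U" unfolding U_def Dset_def[OF msc] using PS z(1) by blast
    have v: "valid U (csec sc U a s)" unfolding valid_def using oU PU csec_mem[OF msc oU sU] by blast
    have "phi (gm U (csec sc U a s)) = z" unfolding phi_germ[OF v] z(2)
      using supp_colon_g[of P U sc, OF PU] by (simp add: csec_def[OF msc])
    moreover have "gm U (csec sc U a s) \<in> carrier ST" unfolding st_carrier using v by blast
    ultimately show "z \<in> phi ` carrier ST" by (metis imageI)
  qed
qed

lemma st_add_closed: "x \<in> carrier ST \<Longrightarrow> y \<in> carrier ST \<Longrightarrow> x \<oplus>\<^bsub>ST\<^esub> y \<in> carrier ST"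
proof -
  assume x: "x \<in> carrier ST" and y: "y \<in> carrier ST"
  obtain U \<gamma> where g: "valid U \<gamma>" "x = gm U \<gamma>" using x by (rule carrier_E)
  obtain V \<delta> where d: "valid V \<delta>" "y = gm V \<delta>" using y by (rule carrier_E)
  show ?thesis unfolding g(2) d(2) st_add[OF g(1) d(1)] st_carrier using gsum_valid[OF g(1) d(1)] by blast
qed

lemma st_mult_closed: "x \<in> carrier ST \<Longrightarrow> y \<in> carrier ST \<Longrightarrow> x \<otimes>\<^bsub>ST\<^esub> y \<in> carrier ST"
proof -
  assume x: "x \<in> carrier ST" and y: "y \<in> carrier ST"
  obtain U \<gamma> where g: "valid U \<gamma>" "x = gm U \<gamma>" using x by (rule carrier_E)
  obtain V \<delta> where d: "valid V \<delta>" "y = gm V \<delta>" using y by (rule carrier_E)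
  show ?thesis unfolding g(2) d(2) st_mult[OF g(1) d(1)] st_carrier using gprod_valid[OF g(1) d(1)] by blast
qed

lemma st_one_closed: "\<one>\<^bsub>ST\<^esub> \<in> carrier ST" unfolding st_one st_carrier using valid_one by blast
lemma st_zero_closed: "\<zero>\<^bsub>ST\<^esub> \<in> carrier ST" unfolding st_zero st_carrier using valid_zero by blast

lemma PUV: "valid U \<gamma> \<Longrightarrow> valid V \<delta> \<Longrightarrow> pp \<in> Supp sc (U \<inter> V)"
  unfolding valid_def using supp_colon_g by blast

lemma phi_iso: "phi \<in> ring_iso ST (loc_ring pp)"
proof (rule ring_iso_memI)
  fix x y assume x: "x \<in> carrier ST" and y: "y \<in> carrier ST"
  obtain U \<gamma> where g: "valid U \<gamma>" "x = gm U \<gamma>" using x by (rule carrier_E)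
  obtain V \<delta> where d: "valid V \<delta>" "y = gm V \<delta>" using y by (rule carrier_E)
  show "phi x \<in> carrier (loc_ring pp)" unfolding g(2) using phi_in[OF g(1)] by (simp add: loc_ring_def)
  show "phi (x \<otimes>\<^bsub>ST\<^esub> y) = phi x \<otimes>\<^bsub>loc_ring pp\<^esub> phi y"
    unfolding g(2) d(2) st_mult[OF g(1) d(1)] phi_germ[OF gprod_valid[OF g(1) d(1)]] phi_germ[OF g(1)] phi_germ[OF d(1)]
    using PUV[OF g(1) d(1)] by (simp add: gprod_apply loc_ring_def)
  show "phi (x \<oplus>\<^bsub>ST\<^esub> y) = phi x \<oplus>\<^bsub>loc_ring pp\<^esub> phi y"
    unfolding g(2) d(2) st_add[OF g(1) d(1)] phi_germ[OF gsum_valid[OF g(1) d(1)]] phi_germ[OF g(1)] phi_germ[OF d(1)]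
    using PUV[OF g(1) d(1)] by (simp add: gsum_apply loc_ring_def)
next
  show "phi \<one>\<^bsub>ST\<^esub> = \<one>\<^bsub>loc_ring pp\<^esub>" using phi_one by (simp add: loc_ring_def)
  show "bij_betw phi (carrier ST) (carrier (loc_ring pp))" using phi_bij by (simp add: loc_ring_def)
qed

lemma stalk_iso: "ST \<simeq> loc_ring pp"
  unfolding is_ring_iso_def using phi_iso by blast

lemma stalk_local: "local_ring ST"
proof (rule local_ring_iso[OF loc_ring_cring[OF ppr] phi_iso loc_ring_local[OF ppr]])
  show "phi \<zero>\<^bsub>ST\<^esub> = \<zero>\<^bsub>loc_ring pp\<^esub>" using phi_zero by (simp add: loc_ring_def)
qed (rule st_zero_closed st_add_closed st_mult_closed st_one_closed | assumption)+

end

theorem corollary3p4: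
  fixes sc :: "'a::comm_ring_1 \<Rightarrow> 'm::ab_group_add \<Rightarrow> 'm"
  assumes "module sc"
    and "Spec sc \<noteq> {}"
  shows "(\<forall>P \<in> Spec sc. AX_stalk sc P \<simeq> loc_ring (colon sc P)) \<and>
         locally_ringed_space (Spec sc) (zopen sc) (sec_ring sc) (sec_res sc)"
proof (intro conjI ballI)
  fix P assume "P \<in> Spec sc"
  then show "AX_stalk sc P \<simeq> loc_ring (colon sc P)" by (rule stalk_iso[OF assms(1)])
next
  show "locally_ringed_space (Spec sc) (zopen sc) (sec_ring sc) (sec_res sc)"
    unfolding locally_ringed_space_def
  proof (intro conjI ballI)
    show "is_topology_on (Spec sc) (zopen sc)" by (rule topology[OF assms(1)])
    show "sheaf_of_rings (Spec sc) (zopen sc) (sec_ring sc) (sec_res sc)" by (rule sheaf[OF assms(1)])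
    fix x assume "x \<in> Spec sc"
    then show "local_ring (stalk (Spec sc) (zopen sc) (sec_ring sc) (sec_res sc) x)"
      using stalk_local[OF assms(1)] unfolding AX_stalk_def by blast
  qed
qed


end
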